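(* Let $X$, $n_0$, $(c_i)$, $(s_{i,j})$ (hence $(n_i)$, $(d_i)$) be fixed, and let $E$ and $F$ be two point-evaluation data of sizes $(k^{(E)}_i)$ and $(k^{(F)}_i)$, both satisfying requirements (a) and (b), giving Villadsen algebras $A_E=A(X,(n_i),(k^{(E)}_i),E)$ and $A_F=A(X,(n_i),(k^{(F)}_i),F)$ with connecting maps $\phi^{(E)}_{i,j}$, $\phi^{(F)}_{i,j}$ and matrix sizes $m^{(E)}_i$, $m^{(F)}_i$. Assume that $\prod_{i\ge1}(n_i+k^{(E)}_i)=\prod_{i\ge1}(n_i+k^{(F)}_i)$ as supernatural numbers and that $$\lim_{i\to\infty}\frac{(n_1+k^{(E)}_1)\cdots(n_i+k^{(E)}_i)}{(n_1+k^{(F)}_1)\cdots(n_i+k^{(F)}_i)}=1.$$ Let $\delta_1>\delta_2>\cdots>0$ with $\sum_s\delta_s<1$. Then there are indices $1=i_0<i_1<i_2<\cdots$ and diagonal unital homomorphisms $\psi_s$, where for even $s$, $\psi_s:\mathrm{M}_{m^{(E)}_{i_s}}(\mathrm{C}(X^{d_{i_s}}))\to\mathrm{M}_{m^{(F)}_{i_{s+1}}}(\mathrm{C}(X^{d_{i_{s+1}}}))$, and for odd $s$, $\psi_s:\mathrm{M}_{m^{(F)}_{i_s}}(\mathrm{C}(X^{d_{i_s}}))\to\mathrm{M}_{m^{(E)}_{i_{s+1}}}(\mathrm{C}(X^{d_{i_{s+1}}}))$, such that: (1) for even $s$, $|\tau(\psi_{s+1}\circ\psi_s(h))-\tau(\phi^{(E)}_{i_s,i_{s+2}}(h))|<\delta_s$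 for all $h$ with $\|h\|\le1$ and all tracial states $\tau$ of $\mathrm{M}_{m^{(E)}_{i_{s+2}}}(\mathrm{C}(X^{d_{i_{s+2}}}))$; for odd $s$, the same with $\phi^{(F)}_{i_s,i_{s+2}}$ and $\mathrm{M}_{m^{(F)}_{i_{s+2}}}(\mathrm{C}(X^{d_{i_{s+2}}}))$; (2) for even $s$, the diagonal maps $\psi_{s+1}\circ\psi_s$ and $\phi^{(E)}_{i_s,i_{s+2}}$ have the same coordinate-projection part (so they differ only in their point-evaluation parts); for odd $s$, the same holds for $\psi_{s+1}\circ\psi_s$ and $\phi^{(F)}_{i_s,i_{s+2}}$.
   Context: Villadsen algebras. Let $X$ be a connected compact metrizable space (the seed space). The data consist of an integer $n_0\ge1$ and, for each $i\ge1$, integers $c_i\ge1$, $s_{i,1},\dots,s_{i,c_i}\ge1$, $k_i\ge1$, together with points $x_{i,1},\dots,x_{i,k_i}\in X^{d_i}$. Here $n_i:=s_{i,1}+\cdots+s_{i,c_i}$, $d_i:=c_1c_2\cdots c_{i-1}$ and $m_i:=n_0(n_1+k_1)\cdots(n_{i-1}+k_{i-1})$ (so $d_1=1$, $m_1=n_0$), and $E=(E_i)$ with $E_i=\{x_{i,1},\dots,x_{i,k_i}\}$. Write $X^{d_{i+1}}=(X^{d_i})^{c_i}$ with coordinate projections $\pi_1,\dots,\pi_{c_i}:X^{d_{i+1}}\to X^{d_i}$. The connecting map $\phi_i:\mathrm{M}_{m_i}(\mathrm{C}(X^{d_i}))\to\mathrm{M}_{m_{i+1}}(\mathrm{C}(X^{d_{i+1}}))$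 is the unital homomorphism $\phi_i(f)=\mathrm{diag}(\underbrace{f\circ\pi_1,\dots,f\circ\pi_1}_{s_{i,1}},\dots,\underbrace{f\circ\pi_{c_i},\dots,f\circ\pi_{c_i}}_{s_{i,c_i}},f(x_{i,1}),\dots,f(x_{i,k_i}))$, where $f(x)\in\mathrm{M}_{m_i}(\mathbb C)$ is regarded as a constant function. Put $\phi_{i,j}:=\phi_{j-1}\circ\cdots\circ\phi_i$ for $i<j$. It is required that (a) for each $i$, the union over $j\ge1$ of the images of $E_{i+j}\subseteq X^{d_{i+j}}=(X^{d_{i+1}})^{c_{i+1}\cdots c_{i+j-1}}$ under all coordinate projections $X^{d_{i+j}}\to X^{d_{i+1}}$ is dense in $X^{d_{i+1}}$; and (b) $\lim_{i\to\infty}\lim_{j\to\infty}\prod_{l=i}^{i+j}\frac{n_l}{n_l+k_l}=1$. The inductive limit is a unital simple C*-algebra, called a Villadsen algebra and denoted $A(X,(n_i),(k_i),E)$. Diagonal maps. A coordinate projection $X^{d'}\to X^{d}$ ($d\le d'$) is a map $(y_1,\dots,y_{d'})\mapsto(y_{\sigma(1)},\dots,y_{\sigma(d)})$ for an injective $\sigma:\{1,\dots,d\}\to\{1,\dots,d'\}$. A unital homomorphism $\psi:\mathrm{M}_m(\mathrm{C}(X^d))\to\mathrm{M}_{mr}(\mathrm{C}(X^{d'}))$ is diagonal if, up to conjugation by a permutation unitary, $\psi(f)=\mathrm{diag}(f\circ\lambda_1,\dots,f\circ\lambda_p,f(z_1),\dots,f(z_q))$ with $p+q=r$, each $\lambda_l$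 a coordinate projection $X^{d'}\to X^d$ and $z_l\in X^d$. The list $(\lambda_1,\dots,\lambda_p)$ (with multiplicity) is its coordinate-projection part and $(z_1,\dots,z_q)$ its point-evaluation part. *)

theory Defs
  imports "HOL-Analysis.Analysis" "HOL-Library.Multiset" "HOL-Library.Extended_Nat"
    "HOL-Computational_Algebra.Primes" "HOL-Combinatorics.Permutations"
begin

text \<open>Points of X^d are extensional functions on {..<d} (value undefined elsewhere),
  with the product topology on nat => 'a.  An element of M_m(C(X^d)) is a function
  y |-> (m x m complex matrix, given as nat => nat => complex), continuous on X^d,
  zero outside X^d and with zero entries outside {..<m} x {..<m}.\<close>

type_synonym 'a vmat = "(nat \<Rightarrow> 'a) \<Rightarrow> nat \<Rightarrow> nat \<Rightarrow> complex"

definition Xpow :: "'a set \<Rightarrow> nat \<Rightarrow> (nat \<Rightarrow> 'a) set" where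
  "Xpow X d = PiE {..<d} (\<lambda>_. X)"

definition MC :: "'a::topological_space set \<Rightarrow> nat \<Rightarrow> nat \<Rightarrow> 'a vmat set" where
  "MC X m d = {f. (\<forall>y. y \<notin> Xpow X d \<longrightarrow> f y = (\<lambda>_ _. 0))
      \<and> (\<forall>y a b. (m \<le> a \<or> m \<le> b) \<longrightarrow> f y a b = 0)
      \<and> (\<forall>a b. continuous_on (Xpow X d) (\<lambda>y. f y a b))}"

definition mc_add :: "'a vmat \<Rightarrow> 'a vmat \<Rightarrow> 'a vmat" where
  "mc_add f g = (\<lambda>y a b. f y a b + g y a b)"

definition mc_scale :: "complex \<Rightarrow> 'a vmat \<Rightarrow> 'a vmat" where
  "mc_scale c f = (\<lambda>y a b. c * f y a b)"

definition mc_mult :: "nat \<Rightarrow> 'a vmat \<Rightarrow> 'a vmat \<Rightarrow> 'a vmat" where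
  "mc_mult m f g = (\<lambda>y a b. \<Sum>q<m. f y a q * g y q b)"

definition mc_adj :: "'a vmat \<Rightarrow> 'a vmat" where
  "mc_adj f = (\<lambda>y a b. cnj (f y b a))"

definition mc_one :: "'a set \<Rightarrow> nat \<Rightarrow> nat \<Rightarrow> 'a vmat" where
  "mc_one X m d = (\<lambda>y a b. if y \<in> Xpow X d \<and> a = b \<and> a < m then 1 else 0)"

definition mat_norm :: "nat \<Rightarrow> (nat \<Rightarrow> nat \<Rightarrow> complex) \<Rightarrow> real" where
  "mat_norm m A = Sup {sqrt (\<Sum>a<m. (cmod (\<Sum>b<m. A a b * v b))\<^sup>2) | v.
                        (\<Sum>b<m. (cmod (v b))\<^sup>2) \<le> 1}"

definition mc_norm :: "'a set \<Rightarrow> nat \<Rightarrow> nat \<Rightarrow> 'a vmat \<Rightarrow> real" where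
  "mc_norm X m d h = Sup ((\<lambda>y. mat_norm m (h y)) ` Xpow X d)"

definition tracial_state :: "'a::topological_space set \<Rightarrow> nat \<Rightarrow> nat \<Rightarrow> ('a vmat \<Rightarrow> complex) \<Rightarrow> bool" where
  "tracial_state X m d \<tau> \<longleftrightarrow>
     (\<forall>f\<in>MC X m d. \<forall>g\<in>MC X m d. \<tau> (mc_add f g) = \<tau> f + \<tau> g)
   \<and> (\<forall>c. \<forall>f\<in>MC X m d. \<tau> (mc_scale c f) = c * \<tau> f)
   \<and> (\<forall>b\<in>MC X m d. Im (\<tau> (mc_mult m (mc_adj b) b)) = 0 \<and> Re (\<tau> (mc_mult m (mc_adj b) b)) \<ge> 0)
   \<and> \<tau> (mc_one X m d) = 1
   \<and> (\<forall>a\<in>MC X m d. \<forall>b\<in>MC X m d. \<tau> (mc_mult m a b) = \<tau> (mc_mult m b a))"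

definition cproj :: "nat \<Rightarrow> (nat \<Rightarrow> nat) \<Rightarrow> (nat \<Rightarrow> 'a) \<Rightarrow> (nat \<Rightarrow> 'a)" where
  "cproj d \<sigma> y = (\<lambda>q. if q < d then y (\<sigma> q) else undefined)"

definition diag_map :: "'a set \<Rightarrow> nat \<Rightarrow> nat \<Rightarrow> nat \<Rightarrow> (nat \<Rightarrow> nat) list \<Rightarrow> (nat \<Rightarrow> 'a) list
     \<Rightarrow> (nat \<Rightarrow> nat) \<Rightarrow> 'a vmat \<Rightarrow> 'a vmat" where
  "diag_map X m d d' lams zs \<pi> f =
     (\<lambda>y. if y \<in> Xpow X d' then
        (\<lambda>a b. if a < m * (length lams + length zs) \<and> b < m * (length lams + length zs)
                 \<and> \<pi> a div m = \<pi> b div m then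
           (if \<pi> a div m < length lams then f (cproj d (lams ! (\<pi> a div m)) y)
            else f (zs ! (\<pi> a div m - length lams))) (\<pi> a mod m) (\<pi> b mod m)
         else 0)
      else (\<lambda>_ _. 0))"

text \<open>psi : M_m(C(X^d)) -> M_m'(C(X^d')) is diagonal with coordinate-projection part
  Lam (a multiset of coordinate projections, each represented by its index map
  restricted to {..<d}); the permutation pi encodes conjugation by a permutation unitary.\<close>

definition diag_decomp :: "'a::topological_space set \<Rightarrow> nat \<Rightarrow> nat \<Rightarrow> nat \<Rightarrow> nat
     \<Rightarrow> ('a vmat \<Rightarrow> 'a vmat) \<Rightarrow> (nat \<Rightarrow> nat) multiset \<Rightarrow> bool" where
  "diag_decomp X m d m' d' \<psi> Lam \<longleftrightarrow>
     (\<exists>lams zs \<pi>. m' = m * (length lams + length zs)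
        \<and> (\<forall>\<sigma>\<in>set lams. \<sigma> \<in> {..<d} \<rightarrow> {..<d'} \<and> inj_on \<sigma> {..<d})
        \<and> set zs \<subseteq> Xpow X d
        \<and> \<pi> permutes {..<m'}
        \<and> (\<forall>f\<in>MC X m d. \<psi> f = diag_map X m d d' lams zs \<pi> f)
        \<and> Lam = mset (map (\<lambda>\<sigma>. restrict \<sigma> {..<d}) lams))"

definition is_diagonal :: "'a::topological_space set \<Rightarrow> nat \<Rightarrow> nat \<Rightarrow> nat \<Rightarrow> nat
     \<Rightarrow> ('a vmat \<Rightarrow> 'a vmat) \<Rightarrow> bool" where
  "is_diagonal X m d m' d' \<psi> \<longleftrightarrow> (\<exists>Lam. diag_decomp X m d m' d' \<psi> Lam)"

text \<open>Villadsen data: c i, s i j (1 \<le> j \<le> c i), k i, points x i l (1 \<le> l \<le> k i).\<close>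

definition vn :: "(nat \<Rightarrow> nat) \<Rightarrow> (nat \<Rightarrow> nat \<Rightarrow> nat) \<Rightarrow> nat \<Rightarrow> nat" where
  "vn c s i = (\<Sum>j\<in>{1..c i}. s i j)"

definition vd :: "(nat \<Rightarrow> nat) \<Rightarrow> nat \<Rightarrow> nat" where
  "vd c i = (\<Prod>l\<in>{1..<i}. c l)"

definition vm :: "nat \<Rightarrow> (nat \<Rightarrow> nat) \<Rightarrow> (nat \<Rightarrow> nat \<Rightarrow> nat) \<Rightarrow> (nat \<Rightarrow> nat) \<Rightarrow> nat \<Rightarrow> nat" where
  "vm n0 c s k i = n0 * (\<Prod>l\<in>{1..<i}. vn c s l + k l)"

text \<open>X^(d c) = (X^d)^c, the j-th coordinate projection (j = 1..c) takes the j-th block of d coordinates.\<close>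

definition block_proj :: "nat \<Rightarrow> nat \<Rightarrow> (nat \<Rightarrow> 'a) \<Rightarrow> (nat \<Rightarrow> 'a)" where
  "block_proj d t y = (\<lambda>q. if q < d then y (t * d + q) else undefined)"

definition conn_map :: "'a set \<Rightarrow> nat \<Rightarrow> (nat \<Rightarrow> nat) \<Rightarrow> (nat \<Rightarrow> nat \<Rightarrow> nat) \<Rightarrow> (nat \<Rightarrow> nat)
     \<Rightarrow> (nat \<Rightarrow> nat \<Rightarrow> nat \<Rightarrow> 'a) \<Rightarrow> nat \<Rightarrow> 'a vmat \<Rightarrow> 'a vmat" where
  "conn_map X n0 c s k x i =
     diag_map X (vm n0 c s k i) (vd c i) (vd c (Suc i))
       (concat (map (\<lambda>j. replicate (s i j) (\<lambda>q. (j - 1) * vd c i + q)) [1..<Suc (c i)]))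
       (map (x i) [1..<Suc (k i)]) id"

text \<open>conn_maps ... i j = phi_{i,j} = phi_{j-1} o ... o phi_i (identity if j \<le> i).\<close>

primrec conn_maps :: "'a set \<Rightarrow> nat \<Rightarrow> (nat \<Rightarrow> nat) \<Rightarrow> (nat \<Rightarrow> nat \<Rightarrow> nat) \<Rightarrow> (nat \<Rightarrow> nat)
     \<Rightarrow> (nat \<Rightarrow> nat \<Rightarrow> nat \<Rightarrow> 'a) \<Rightarrow> nat \<Rightarrow> nat \<Rightarrow> 'a vmat \<Rightarrow> 'a vmat" where
  "conn_maps X n0 c s k x i 0 = id"
| "conn_maps X n0 c s k x i (Suc j) =
     (if i \<le> j then conn_map X n0 c s k x j \<circ> conn_maps X n0 c s k x i j else id)"

definition villadsen_data :: "'a::metric_space set \<Rightarrow> nat \<Rightarrow> (nat \<Rightarrow> nat) \<Rightarrow> (nat \<Rightarrow> nat \<Rightarrow> nat)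
     \<Rightarrow> (nat \<Rightarrow> nat) \<Rightarrow> (nat \<Rightarrow> nat \<Rightarrow> nat \<Rightarrow> 'a) \<Rightarrow> bool" where
  "villadsen_data X n0 c s k x \<longleftrightarrow>
     compact X \<and> connected X \<and> n0 \<ge> 1
   \<and> (\<forall>i\<ge>1. c i \<ge> 1 \<and> k i \<ge> 1 \<and> (\<forall>j\<in>{1..c i}. s i j \<ge> 1)
         \<and> (\<forall>l\<in>{1..k i}. x i l \<in> Xpow X (vd c i)))
   \<comment> \<open>requirement (a)\<close>
   \<and> (\<forall>i\<ge>1. Xpow X (vd c (Suc i)) \<subseteq>
        closure (\<Union>j\<in>{1..}. \<Union>l\<in>{1..k (i + j)}. \<Union>t\<in>{..< vd c (i + j) div vd c (Suc i)}.
                   {block_proj (vd c (Suc i)) t (x (i + j) l)}))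
   \<comment> \<open>requirement (b)\<close>
   \<and> (\<lambda>i. lim (\<lambda>j. \<Prod>l\<in>{i..i + j}. real (vn c s l) / real (vn c s l + k l))) \<longlonglongrightarrow> 1"

text \<open>Supernatural number prod_{i>=1} f i, as the map prime p |-> total multiplicity in enat.\<close>

definition supernat :: "(nat \<Rightarrow> nat) \<Rightarrow> nat \<Rightarrow> enat" where
  "supernat f p = (SUP N. enat (\<Sum>l\<in>{1..N}. multiplicity p (f l)))"

end

theory Submission
  imports Defs "HOL-Combinatorics.Permutations"
begin

type_synonym 'a lab = "(nat \<Rightarrow> nat) + (nat \<Rightarrow> 'a)"

definition evpt :: "nat \<Rightarrow> (nat \<Rightarrow> 'a) \<Rightarrow> 'a lab \<Rightarrow> (nat \<Rightarrow> 'a)" where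
  "evpt d y l = (case l of Inl \<sigma> \<Rightarrow> cproj d \<sigma> y | Inr z \<Rightarrow> z)"

definition gd :: "'a set \<Rightarrow> nat \<Rightarrow> nat \<Rightarrow> nat \<Rightarrow> 'a lab list \<Rightarrow> 'a vmat \<Rightarrow> 'a vmat" where
  "gd X m d d' ls f = (\<lambda>y a b. if y \<in> Xpow X d' \<and> a < m * length ls \<and> b < m * length ls
        \<and> a div m = b div m then f (evpt d y (ls ! (a div m))) (a mod m) (b mod m) else 0)"

fun comb :: "nat \<Rightarrow> 'a lab \<Rightarrow> 'a lab \<Rightarrow> 'a lab" where
  "comb d (Inl \<tau>) (Inl \<sigma>) = Inl (restrict (\<tau> \<circ> \<sigma>) {..<d})"
| "comb d (Inl \<tau>) (Inr z) = Inr z"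
| "comb d (Inr w) (Inl \<sigma>) = Inr (cproj d \<sigma> w)"
| "comb d (Inr w) (Inr z) = Inr z"

definition cprod :: "nat \<Rightarrow> 'a lab list \<Rightarrow> 'a lab list \<Rightarrow> 'a lab list" where
  "cprod d ls2 ls1 = concat (map (\<lambda>u. map (comb d u) ls1) ls2)"

definition valid :: "'a set \<Rightarrow> nat \<Rightarrow> nat \<Rightarrow> 'a lab \<Rightarrow> bool" where
  "valid X d d' l = (case l of Inl \<sigma> \<Rightarrow> \<sigma> \<in> {..<d} \<rightarrow> {..<d'} \<and> inj_on \<sigma> {..<d}
                              | Inr z \<Rightarrow> z \<in> Xpow X d)"

lemma cproj_Xpow: "\<sigma> \<in> {..<d} \<rightarrow> {..<d'} \<Longrightarrow> y \<in> Xpow X d' \<Longrightarrow> cproj d \<sigma> y \<in> Xpow X d"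
  unfolding Xpow_def cproj_def by (auto simp: PiE_def Pi_def extensional_def)

lemma cproj_cproj: "\<sigma> \<in> {..<d1} \<rightarrow> {..<d2} \<Longrightarrow>
   cproj d1 \<sigma> (cproj d2 \<tau> y) = cproj d1 (restrict (\<tau> \<circ> \<sigma>) {..<d1}) y"
  unfolding cproj_def by (auto simp: Pi_def fun_eq_iff)

lemma evpt_Xpow: "valid X d d' l \<Longrightarrow> y \<in> Xpow X d' \<Longrightarrow> evpt d y l \<in> Xpow X d"
  unfolding valid_def evpt_def by (cases l) (auto intro: cproj_Xpow)

lemma evpt_comb: "valid X d1 d2 v \<Longrightarrow> evpt d1 (evpt d2 y u) v = evpt d1 y (comb d1 u v)"
  unfolding valid_def evpt_def
  by (cases u; cases v) (auto simp: cproj_cproj)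

lemma valid_comb: "valid X d2 d3 u \<Longrightarrow> valid X d1 d2 v \<Longrightarrow> valid X d1 d3 (comb d1 u v)"
  unfolding valid_def
  apply (cases u; cases v)
     apply (auto simp: Pi_def inj_on_def intro!: cproj_Xpow)
  done

lemma length_cprod[simp]: "length (cprod d ls2 ls1) = length ls2 * length ls1"
  unfolding cprod_def by (induction ls2) auto

lemma nth_cprod: "w < length ls2 * length ls1 \<Longrightarrow>
   cprod d ls2 ls1 ! w = comb d (ls2 ! (w div length ls1)) (ls1 ! (w mod length ls1))"
proof (induction ls2 arbitrary: w)
  case Nil then show ?case by simp
next
  case (Cons u ls2)
  let ?L = "length ls1"
  have e: "cprod d (u # ls2) ls1 = map (comb d u) ls1 @ cprod d ls2 ls1"
    unfolding cprod_def by simp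
  show ?case
  proof (cases "w < ?L")
    case True then show ?thesis using e by (simp add: nth_append)
  next
    case False
    then have w: "w - ?L < length ls2 * ?L" using Cons.prems by auto
    have L0: "?L > 0" using Cons.prems by (cases "?L = 0") auto
    have ww: "w = (w - ?L) + ?L" using False by simp
    have q: "(w - ?L + ?L) div ?L = (w - ?L) div ?L + 1" using L0 by (simp add: div_add_self2)
    have "(w - ?L) div ?L = w div ?L - 1"
      using q ww by simp
    moreover have "(w - ?L) mod ?L = w mod ?L" using False by (simp add: le_mod_geq)
    moreover have "0 < w div ?L" using False L0 by (simp add: div_greater_zero_iff)
    ultimately show ?thesis using e Cons.IH[OF w] False
      by (auto simp: nth_append nth_Cons')
  qed
qed

lemma set_cprod_valid:
  assumes "\<forall>l\<in>set ls2. valid X d2 d3 l" "\<forall>l\<in>set ls1. valid X d1 d2 l"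
  shows "\<forall>l\<in>set (cprod d1 ls2 ls1). valid X d1 d3 l"
  using assms unfolding cprod_def by (auto intro: valid_comb)

lemma gd_app: "gd X m d d' ls f y a b = (if y \<in> Xpow X d' \<and> a < m * length ls \<and> b < m * length ls
        \<and> a div m = b div m then f (evpt d y (ls ! (a div m))) (a mod m) (b mod m) else 0)"
  by (simp add: gd_def)

lemma gd_comp:
  assumes m2: "m2 = m1 * length ls1" and m1: "m1 > 0"
    and v2: "\<forall>l\<in>set ls2. valid X d2 d3 l" and v1: "\<forall>l\<in>set ls1. valid X d1 d2 l"
  shows "gd X m2 d2 d3 ls2 (gd X m1 d1 d2 ls1 f) = gd X m1 d1 d3 (cprod d1 ls2 ls1) f"
proof (intro ext)
  fix y a b
  let ?L1 = "length ls1" and ?L2 = "length ls2"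
  have bnd: "m2 * ?L2 = m1 * (?L2 * ?L1)" using m2 by simp
  show "gd X m2 d2 d3 ls2 (gd X m1 d1 d2 ls1 f) y a b = gd X m1 d1 d3 (cprod d1 ls2 ls1) f y a b"
  proof (cases "y \<in> Xpow X d3 \<and> a < m1 * (?L2 * ?L1) \<and> b < m1 * (?L2 * ?L1)")
    case False
    then show ?thesis unfolding gd_app[of X m2] gd_app[of X m1 d1 d3] length_cprod bnd by auto
  next
    case True
    then have y: "y \<in> Xpow X d3" and a: "a < m1 * (?L2 * ?L1)" and b: "b < m1 * (?L2 * ?L1)"
      by auto
    have L1: "?L1 > 0" using a by (cases "?L1 = 0") auto
    have ad: "a div m2 = a div m1 div ?L1" "b div m2 = b div m1 div ?L1"
      unfolding m2 by (simp_all add: div_mult2_eq)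
    have am: "(a mod m2) div m1 = a div m1 mod ?L1" "(a mod m2) mod m1 = a mod m1"
             "(b mod m2) div m1 = b div m1 mod ?L1" "(b mod m2) mod m1 = b mod m1"
      unfolding m2 using m1 by (simp_all add: mod_mult2_eq)
    have lt: "a mod m2 < m1 * ?L1" "b mod m2 < m1 * ?L1" using m2 m1 L1 by simp_all
    have eqv: "(a div m2 = b div m2 \<and> (a mod m2) div m1 = (b mod m2) div m1) = (a div m1 = b div m1)"
      unfolding ad am by (metis div_mult_mod_eq)
    show ?thesis
    proof (cases "a div m1 = b div m1")
      case False
      then show ?thesis unfolding gd_app[of X m2] gd_app[of X m1 d1 d2] gd_app[of X m1 d1 d3]
        using eqv by auto
    next
      case True
      have u: "a div m2 < ?L2" using a m1 L1 unfolding ad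
        by (simp add: div_less_iff_less_mult mult.commute mult.left_commute)
      have w: "a div m1 < ?L2 * ?L1" using a m1 by (simp add: div_less_iff_less_mult mult.commute)
      have ev2: "evpt d2 y (ls2 ! (a div m2)) \<in> Xpow X d2"
        using v2 u y by (auto intro: evpt_Xpow)
      have vv: "valid X d1 d2 (ls1 ! (a div m1 mod ?L1))" using v1 L1 by auto
      have "gd X m2 d2 d3 ls2 (gd X m1 d1 d2 ls1 f) y a b
          = gd X m1 d1 d2 ls1 f (evpt d2 y (ls2 ! (a div m2))) (a mod m2) (b mod m2)"
        using True eqv y a b bnd by (simp only: gd_app[of X m2]) simp
      also have "\<dots> = f (evpt d1 (evpt d2 y (ls2 ! (a div m2))) (ls1 ! (a div m1 mod ?L1)))
                         (a mod m1) (b mod m1)"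
        using ev2 lt True eqv am by (simp add: gd_app[of X m1 d1 d2])
      also have "\<dots> = f (evpt d1 y (cprod d1 ls2 ls1 ! (a div m1))) (a mod m1) (b mod m1)"
        using vv w ad by (simp add: evpt_comb nth_cprod)
      also have "\<dots> = gd X m1 d1 d3 (cprod d1 ls2 ls1) f y a b"
        using True y a b by (simp add: gd_app[of X m1 d1 d3])
      finally show ?thesis .
    qed
  qed
qed

definition LamOf :: "nat \<Rightarrow> 'a lab list \<Rightarrow> (nat \<Rightarrow> nat) multiset" where
  "LamOf d ls = mset (map (\<lambda>\<sigma>. restrict \<sigma> {..<d}) (map projl (filter isl ls)))"

lemma gd_diag_decomp:
  fixes X :: "'a::topological_space set"
  assumes m: "m > 0" and v: "\<forall>l\<in>set ls. valid X d d' l" and m': "m' = m * length ls"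
  shows "diag_decomp X m d m' d' (gd X m d d' ls) (LamOf d ls)"
proof -
  define lams where "lams = map projl (filter isl ls)"
  define zs where "zs = map projr (filter (\<lambda>l. \<not> isl l) ls)"
  define ys where "ys = map Inl lams @ map Inr zs"
  let ?L = "length ls"
  have ys': "ys = filter isl ls @ filter (\<lambda>l. \<not> isl l) ls"
    unfolding ys_def lams_def zs_def by (induction ls) auto
  have mys: "mset ls = mset ys" unfolding ys' by (simp add: multiset_partition[symmetric])
  have lys: "length ys = ?L" using mys by (metis size_mset)
  have lz: "length lams + length zs = ?L" using lys unfolding ys_def by simp
  obtain p where p: "p permutes {..<length ys}" and pl: "permute_list p ys = ls"
    using mset_eq_permutation[OF mys] by blast
  have pL: "p permutes {..<?L}" using p lys by simp
  have lsn: "w < ?L \<Longrightarrow> ls ! w = ys ! p w" for w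
    using permute_list_nth[OF p, of w] pl lys by simp
  have pin: "w < ?L \<Longrightarrow> p w < ?L" for w using permutes_in_image[OF pL] by simp
  define \<pi> where "\<pi> a = (if a < m * ?L then p (a div m) * m + a mod m else a)" for a
  have \<pi>d: "a < m * ?L \<Longrightarrow> \<pi> a div m = p (a div m) \<and> \<pi> a mod m = a mod m" for a
    unfolding \<pi>_def using m by simp
  have wlt: "a < m * ?L \<Longrightarrow> a div m < ?L" for a using m
    by (simp add: div_less_iff_less_mult mult.commute)
  have \<pi>lt: "a < m * ?L \<Longrightarrow> \<pi> a < m * ?L" for a
  proof -
    assume a: "a < m * ?L"
    have "p (a div m) < ?L" using pin wlt a by blast
    then have "p (a div m) + 1 \<le> ?L" by simp
    then have "(p (a div m) + 1) * m \<le> ?L * m" by (rule mult_right_mono) simp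
    moreover have "a mod m < m" using m by simp
    ultimately show ?thesis using a unfolding \<pi>_def by (simp add: algebra_simps)
  qed
  have inj: "inj_on \<pi> {..<m * ?L}"
  proof (rule inj_onI)
    fix a b assume a: "a \<in> {..<m * ?L}" and b: "b \<in> {..<m * ?L}" and e: "\<pi> a = \<pi> b"
    have "p (a div m) = p (b div m)" "a mod m = b mod m" using \<pi>d a b e by (metis lessThan_iff)+
    then have "a div m = b div m" "a mod m = b mod m" using permutes_inj[OF pL] by (auto dest: injD)
    then show "a = b" by (metis div_mult_mod_eq)
  qed
  have img: "\<pi> ` {..<m * ?L} = {..<m * ?L}"
    by (rule endo_inj_surj) (use \<pi>lt inj in auto)
  have perm: "\<pi> permutes {..<m'}" unfolding m'
  proof (rule bij_imp_permutes)
    show "bij_betw \<pi> {..<m * ?L} {..<m * ?L}" using inj img by (simp add: bij_betw_def)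
    show "x \<notin> {..<m * ?L} \<Longrightarrow> \<pi> x = x" for x by (simp add: \<pi>_def)
  qed
  have eq: "gd X m d d' ls f = diag_map X m d d' lams zs \<pi> f" for f
  proof (intro ext)
    fix y a b
    show "gd X m d d' ls f y a b = diag_map X m d d' lams zs \<pi> f y a b"
    proof (cases "y \<in> Xpow X d' \<and> a < m * ?L \<and> b < m * ?L")
      case False then show ?thesis unfolding gd_app diag_map_def lz by auto
    next
      case True
      then have a: "a < m * ?L" and b: "b < m * ?L" by auto
      have c: "(\<pi> a div m = \<pi> b div m) = (a div m = b div m)"
        using \<pi>d[OF a] \<pi>d[OF b] permutes_inj[OF pL] by (auto dest: injD)
      show ?thesis
      proof (cases "a div m = b div m")
        case False then show ?thesis using True c unfolding gd_app diag_map_def lz by auto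
      next
        case eqab: True
        have w: "a div m < ?L" using wlt a by blast
        have pw: "p (a div m) < length ys" using pin w lys by simp
        have "evpt d y (ls ! (a div m)) = (if p (a div m) < length lams then cproj d (lams ! p (a div m)) y
                   else zs ! (p (a div m) - length lams))"
          using lsn[OF w] pw unfolding ys_def evpt_def by (auto simp: nth_append)
        then show ?thesis using True c eqab \<pi>d[OF a] \<pi>d[OF b] unfolding gd_app diag_map_def lz
          by auto
      qed
    qed
  qed
  have vl: "\<forall>\<sigma>\<in>set lams. \<sigma> \<in> {..<d} \<rightarrow> {..<d'} \<and> inj_on \<sigma> {..<d}"
  proof
    fix \<sigma> assume "\<sigma> \<in> set lams"
    then obtain l where l: "l \<in> set ls" "isl l" "\<sigma> = projl l" unfolding lams_def by auto
    then have "l = Inl \<sigma>" by (cases l) auto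
    then show "\<sigma> \<in> {..<d} \<rightarrow> {..<d'} \<and> inj_on \<sigma> {..<d}"
      using v l(1) unfolding valid_def by force
  qed
  have vz: "set zs \<subseteq> Xpow X d"
    using v unfolding zs_def valid_def by (auto split: sum.splits)
  show ?thesis unfolding diag_decomp_def
    apply (rule exI[of _ lams], rule exI[of _ zs], rule exI[of _ \<pi>])
    using vl vz perm eq lz m' by (auto simp: LamOf_def lams_def)
qed

lemma isl_comb[simp]: "isl (comb d u v) = (isl u \<and> isl v)"
  by (cases u; cases v) auto

lemma cprod_Cons: "cprod d (u # a) b = map (comb d u) b @ cprod d a b"
  unfolding cprod_def by simp

lemma cprod_Nil[simp]: "cprod d [] b = []"
  unfolding cprod_def by simp

lemma filter_isl_map_comb: "filter isl (map (comb d u) b) = (if isl u then map (comb d u) (filter isl b) else [])"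
  by (induction b) auto

lemma filter_isl_cprod: "filter isl (cprod d a b) = cprod d (filter isl a) (filter isl b)"
  by (induction a) (auto simp: cprod_Cons filter_isl_map_comb)

lemma comb_assoc:
  assumes "valid X d1 d2 w"
  shows "comb d1 u (comb d1 v w) = comb d1 (comb d2 u v) w"
  using assms unfolding valid_def
  by (cases u; cases v; cases w) (auto simp: cproj_cproj fun_eq_iff Pi_def)

lemma cprod_assoc:
  assumes "\<forall>w\<in>set c. valid X d1 d2 w"
  shows "cprod d1 a (cprod d1 b c) = cprod d1 (cprod d2 a b) c"
proof (induction a)
  case Nil then show ?case by simp
next
  case (Cons u a)
  have "map (comb d1 u) (cprod d1 b c) = cprod d1 (map (comb d2 u) b) c"
  proof (induction b)
    case Nil then show ?case by simp
  next
    case (Cons v b)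
    then show ?case using assms comb_assoc[of X d1 d2 _ u v] by (simp add: cprod_Cons)
  qed
  moreover have "cprod d1 (xs @ ys) c = cprod d1 xs c @ cprod d1 ys c" for xs ys
    unfolding cprod_def by simp
  ultimately show ?case using Cons by (simp add: cprod_Cons)
qed

lemma mset_cprod: "mset (cprod d a b) = sum_mset (image_mset (\<lambda>u. image_mset (comb d u) (mset b)) (mset a))"
  by (induction a) (auto simp: cprod_Cons)

lemma sum_mset_image_mono_fun:
  "(\<And>x. f x \<subseteq># g x) \<Longrightarrow> sum_mset (image_mset f A) \<subseteq># sum_mset (image_mset g A)"
  by (induction A) (auto intro: subset_mset.add_mono)

lemma sum_mset_image_mono_set:
  assumes "A' \<subseteq># A"
  shows "sum_mset (image_mset f A') \<subseteq># sum_mset (image_mset f A)"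
proof -
  have "A = A' + (A - A')" using assms by (simp add: subset_mset.add_diff_inverse)
  then have "sum_mset (image_mset f A) = sum_mset (image_mset f A') + sum_mset (image_mset f (A - A'))"
    by (metis image_mset_union sum_mset.union)
  then show ?thesis by simp
qed

lemma mset_cprod_mono:
  assumes "mset a' \<subseteq># mset a" "mset b' \<subseteq># mset b"
  shows "mset (cprod d a' b') \<subseteq># mset (cprod d a b)"
proof -
  have "sum_mset (image_mset (\<lambda>u. image_mset (comb d u) (mset b')) (mset a'))
     \<subseteq># sum_mset (image_mset (\<lambda>u. image_mset (comb d u) (mset b)) (mset a'))"
    by (rule sum_mset_image_mono_fun) (use assms(2) in \<open>simp add: image_mset_subseteq_mono\<close>)
  also have "\<dots> \<subseteq># sum_mset (image_mset (\<lambda>u. image_mset (comb d u) (mset b)) (mset a))"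
    by (rule sum_mset_image_mono_set[OF assms(1)])
  finally show ?thesis by (simp add: mset_cprod)
qed

definition conn_labels :: "(nat \<Rightarrow> nat) \<Rightarrow> (nat \<Rightarrow> nat \<Rightarrow> nat) \<Rightarrow> (nat \<Rightarrow> nat)
     \<Rightarrow> (nat \<Rightarrow> nat \<Rightarrow> nat \<Rightarrow> 'a) \<Rightarrow> nat \<Rightarrow> 'a lab list" where
  "conn_labels c s k x i =
     map Inl (concat (map (\<lambda>j. replicate (s i j) (\<lambda>q. (j - 1) * vd c i + q)) [1..<Suc (c i)]))
     @ map Inr (map (x i) [1..<Suc (k i)])"

primrec labs :: "(nat \<Rightarrow> nat) \<Rightarrow> (nat \<Rightarrow> nat \<Rightarrow> nat) \<Rightarrow> (nat \<Rightarrow> nat)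
     \<Rightarrow> (nat \<Rightarrow> nat \<Rightarrow> nat \<Rightarrow> 'a) \<Rightarrow> nat \<Rightarrow> nat \<Rightarrow> 'a lab list" where
  "labs c s k x i 0 = []"
| "labs c s k x i (Suc j) = (if i < j then cprod (vd c i) (conn_labels c s k x j) (labs c s k x i j)
      else if i = j then conn_labels c s k x j else [])"

lemma vd_Suc: "l \<ge> 1 \<Longrightarrow> vd c (Suc l) = vd c l * c l"
  unfolding vd_def by (simp add: prod.atLeastLessThan_Suc)

lemma vm_Suc: "l \<ge> 1 \<Longrightarrow> vm n0 c s k (Suc l) = vm n0 c s k l * (vn c s l + k l)"
  unfolding vm_def by (simp add: prod.atLeastLessThan_Suc)

lemma length_conn_labels: "length (conn_labels c s k x i) = vn c s i + k i"
proof -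
  have "length (concat (map (\<lambda>j. replicate (s i j) (\<lambda>q. (j - 1) * vd c i + q)) [1..<Suc (c i)]))
      = sum_list (map (s i) [1..<Suc (c i)])"
    by (simp add: length_concat comp_def)
  also have "\<dots> = vn c s i" unfolding vn_def
    by (simp only: sum_set_upt_conv_sum_list_nat[symmetric] set_upt atLeastLessThanSuc_atLeastAtMost)
  finally show ?thesis unfolding conn_labels_def by simp
qed

lemma filter_isl_conn_labels: "length (filter isl (conn_labels c s k x i)) = vn c s i"
proof -
  have "length (concat (map (\<lambda>j. replicate (s i j) (\<lambda>q. (j - 1) * vd c i + q)) [1..<Suc (c i)]))
      = sum_list (map (s i) [1..<Suc (c i)])"
    by (simp add: length_concat comp_def)
  also have "\<dots> = vn c s i" unfolding vn_def
    by (simp only: sum_set_upt_conv_sum_list_nat[symmetric] set_upt atLeastLessThanSuc_atLeastAtMost)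
  finally show ?thesis unfolding conn_labels_def by (simp add: comp_def)
qed

lemma valid_conn_labels:
  assumes l: "l \<ge> 1" and xs: "\<forall>q\<in>{1..k l}. x l q \<in> Xpow X (vd c l)"
  shows "\<forall>u\<in>set (conn_labels c s k x l). valid X (vd c l) (vd c (Suc l)) u"
proof
  fix u assume u: "u \<in> set (conn_labels c s k x l)"
  show "valid X (vd c l) (vd c (Suc l)) u"
  proof (cases u)
    case (Inl \<sigma>)
    have "\<exists>j\<in>{1..c l}. \<sigma> = (\<lambda>q. (j - 1) * vd c l + q)"
      using u Inl unfolding conn_labels_def by fastforce
    then obtain j where j: "j \<in> {1..c l}" "\<sigma> = (\<lambda>q. (j - 1) * vd c l + q)" by blast
    have "(j - 1) * vd c l + q < vd c l * c l" if "q < vd c l" for q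
    proof -
      have "(j - 1) * vd c l + q < (j - 1) * vd c l + vd c l" using that by simp
      also have "\<dots> = j * vd c l" using j(1) by (cases j) auto
      also have "\<dots> \<le> c l * vd c l" using j(1) by simp
      finally show ?thesis by (simp add: mult.commute)
    qed
    then show ?thesis using Inl j vd_Suc[OF l] unfolding valid_def by (auto simp: inj_on_def)
  next
    case (Inr z)
    have "\<exists>q\<in>{1..k l}. z = x l q" using u Inr unfolding conn_labels_def by fastforce
    then show ?thesis using Inr xs unfolding valid_def by auto
  qed
qed

lemma diag_map_id_gd: "diag_map X m d d' L Z id = gd X m d d' (map Inl L @ map Inr Z)"
proof (intro ext)
  fix f y a b
  show "diag_map X m d d' L Z id f y a b = gd X m d d' (map Inl L @ map Inr Z) f y a b"
  proof (cases "y \<in> Xpow X d' \<and> a < m * (length L + length Z) \<and> b < m * (length L + length Z) \<and> a div m = b div m")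
    case True
    then have w: "a div m < length L + length Z"
      by (metis div_less_iff_less_mult mult.commute mult_0 not_less0 neq0_conv)
    have e: "evpt d y ((map Inl L @ map Inr Z) ! (a div m)) = (if a div m < length L then cproj d (L ! (a div m)) y
     else Z ! (a div m - length L))"
      using w by (auto simp: nth_append evpt_def)
    show ?thesis unfolding diag_map_def gd_app using True e by simp
  next
    case False then show ?thesis unfolding diag_map_def gd_app by auto
  qed
qed

lemma conn_map_gd: "conn_map X n0 c s k x i = gd X (vm n0 c s k i) (vd c i) (vd c (Suc i)) (conn_labels c s k x i)"
  unfolding conn_map_def conn_labels_def diag_map_id_gd by (rule refl)

lemma conn_maps_self: "conn_maps X n0 c s k x i i = id"
  by (cases i) auto

context
  fixes X :: "'a set" and n0 :: nat and c :: "nat \<Rightarrow> nat" and s :: "nat \<Rightarrow> nat \<Rightarrow> nat"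
    and k :: "nat \<Rightarrow> nat" and x :: "nat \<Rightarrow> nat \<Rightarrow> nat \<Rightarrow> 'a"
  assumes H: "\<forall>l\<ge>1. c l \<ge> 1 \<and> k l \<ge> 1 \<and> (\<forall>q\<in>{1..k l}. x l q \<in> Xpow X (vd c l))"
    and n0: "n0 \<ge> 1"
begin

lemma vm_pos: "vm n0 c s k l > 0"
proof -
  have "\<forall>j\<in>{1..<l}. vn c s j + k j > 0" using H by auto
  then show ?thesis unfolding vm_def using n0 by (simp add: prod_pos)
qed

lemma labs_props:
  assumes i: "i \<ge> 1" and j: "Suc i \<le> j"
  shows "(\<forall>u\<in>set (labs c s k x i j). valid X (vd c i) (vd c j) u)
    \<and> vm n0 c s k i * length (labs c s k x i j) = vm n0 c s k j
    \<and> conn_maps X n0 c s k x i j = gd X (vm n0 c s k i) (vd c i) (vd c j) (labs c s k x i j)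
    \<and> length (filter isl (labs c s k x i j)) = (\<Prod>l\<in>{i..<j}. vn c s l)"
  using j
proof (induction j rule: dec_induct)
  case base
  have "conn_maps X n0 c s k x i (Suc i) = conn_map X n0 c s k x i"
    by (simp add: conn_maps_self)
  then show ?case using valid_conn_labels[of i k x X c s] H i
    by (simp add: conn_map_gd length_conn_labels vm_Suc filter_isl_conn_labels)
next
  case (step j)
  have j1: "j \<ge> 1" using step i by simp
  have lj: "labs c s k x i (Suc j) = cprod (vd c i) (conn_labels c s k x j) (labs c s k x i j)"
    using step by simp
  have vc: "\<forall>u\<in>set (conn_labels c s k x j). valid X (vd c j) (vd c (Suc j)) u"
    using valid_conn_labels[of j k x X c s] H j1 by simp
  have v: "\<forall>u\<in>set (labs c s k x i (Suc j)). valid X (vd c i) (vd c (Suc j)) u"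
    unfolding lj by (rule set_cprod_valid[OF vc]) (use step in simp)
  have len: "vm n0 c s k i * length (labs c s k x i (Suc j)) = vm n0 c s k (Suc j)"
    unfolding lj using step vm_Suc[OF j1] by (simp add: length_conn_labels algebra_simps)
  have "conn_maps X n0 c s k x i (Suc j) = conn_map X n0 c s k x j \<circ> conn_maps X n0 c s k x i j"
    using step by simp
  also have "\<dots> = gd X (vm n0 c s k i) (vd c i) (vd c (Suc j)) (labs c s k x i (Suc j))"
  proof
    fix f
    show "(conn_map X n0 c s k x j \<circ> conn_maps X n0 c s k x i j) f =
         gd X (vm n0 c s k i) (vd c i) (vd c (Suc j)) (labs c s k x i (Suc j)) f"
      unfolding lj comp_def conn_map_gd using step
      by (simp add: gd_comp[OF _ vm_pos vc] del: conn_maps.simps)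
  qed
  finally have cm: "conn_maps X n0 c s k x i (Suc j) = gd X (vm n0 c s k i) (vd c i) (vd c (Suc j)) (labs c s k x i (Suc j))" .
  have "length (filter isl (labs c s k x i (Suc j))) = vn c s j * (\<Prod>l\<in>{i..<j}. vn c s l)"
    unfolding lj filter_isl_cprod using step by (simp add: filter_isl_conn_labels)
  also have "\<dots> = (\<Prod>l\<in>{i..<Suc j}. vn c s l)" using step by (simp add: prod.atLeastLessThan_Suc)
  finally show ?case using v len cm by simp
qed

lemma labs_split:
  assumes i: "i \<ge> 1" and ij: "i < j" and jk: "j < k'"
  shows "labs c s k x i k' = cprod (vd c i) (labs c s k x j k') (labs c s k x i j)"
proof -
  have "Suc j \<le> k'" using jk by simp
  then show ?thesis
proof (induction k' rule: dec_induct)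
  case base then show ?case using ij by simp
next
  case (step n)

  have vc: "\<forall>u\<in>set (labs c s k x i j). valid X (vd c i) (vd c j) u"
    using labs_props[OF i] ij by simp
  have "labs c s k x i (Suc n) = cprod (vd c i) (conn_labels c s k x n) (labs c s k x i n)"
    using step ij by simp
  also have "\<dots> = cprod (vd c i) (conn_labels c s k x n) (cprod (vd c i) (labs c s k x j n) (labs c s k x i j))"
    using step by simp
  also have "\<dots> = cprod (vd c i) (cprod (vd c j) (conn_labels c s k x n) (labs c s k x j n)) (labs c s k x i j)"
    by (rule cprod_assoc[OF vc])
  also have "cprod (vd c j) (conn_labels c s k x n) (labs c s k x j n) = labs c s k x j (Suc n)"
    using step by simp
  finally show ?case .
qed
qed

end

definition unitm :: "'a set \<Rightarrow> nat \<Rightarrow> nat \<Rightarrow> nat \<Rightarrow> ((nat \<Rightarrow> 'a) \<Rightarrow> complex) \<Rightarrow> 'a vmat" where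
  "unitm X d a b g = (\<lambda>y i j. if y \<in> Xpow X d \<and> i = a \<and> j = b then g y else 0)"

definition zm :: "'a vmat" where "zm = (\<lambda>_ _ _. 0)"

lemma unitm_cong: "(\<And>y. y \<in> Xpow X d \<Longrightarrow> g y = h y) \<Longrightarrow> unitm X d a b g = unitm X d a b h"
  unfolding unitm_def by (auto simp: fun_eq_iff)

lemma MC_zm: "zm \<in> MC X m d"
  unfolding MC_def zm_def by auto

lemma MC_add: "f \<in> MC X m d \<Longrightarrow> g \<in> MC X m d \<Longrightarrow> mc_add f g \<in> MC X m d"
  unfolding MC_def mc_add_def by (auto intro: continuous_on_add)

lemma MC_scale: "f \<in> MC X m d \<Longrightarrow> mc_scale c f \<in> MC X m d"
  unfolding MC_def mc_scale_def by (auto intro: continuous_on_mult continuous_on_const)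

lemma MC_sum: "finite K \<Longrightarrow> (\<And>k. k \<in> K \<Longrightarrow> F k \<in> MC X m d) \<Longrightarrow> (\<lambda>y i j. \<Sum>k\<in>K. F k y i j) \<in> MC X m d"
  unfolding MC_def by (auto intro!: continuous_on_sum)

lemma MC_unitm:
  assumes "a < m" "b < m" "continuous_on (Xpow X d) g"
  shows "unitm X d a b g \<in> MC X m d"
proof -
  have "continuous_on (Xpow X d) (\<lambda>y. unitm X d a b g y i j)" for i j
  proof (cases "i = a \<and> j = b")
    case True
    have "continuous_on (Xpow X d) (\<lambda>y. if y \<in> Xpow X d then g y else 0)"
      by (rule continuous_on_eq[OF assms(3)]) auto
    then show ?thesis using True unfolding unitm_def by simp
  next
    case False then show ?thesis unfolding unitm_def by (simp add: False)
  qed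
  then show ?thesis using assms unfolding MC_def unitm_def by auto
qed

lemma mult_unitm:
  assumes "b < m"
  shows "mc_mult m (unitm X d a b g) (unitm X d b' c h) =
          (if b = b' then unitm X d a c (\<lambda>y. g y * h y) else zm)"
proof (intro ext)
  fix y i j
  have "(\<Sum>q<m. unitm X d a b g y i q * unitm X d b' c h y q j)
      = (\<Sum>q<m. if q = b then (if y \<in> Xpow X d \<and> i = a \<and> b = b' \<and> j = c then g y * h y else 0) else 0)"
    by (rule sum.cong) (auto simp: unitm_def)
  also have "\<dots> = (if y \<in> Xpow X d \<and> i = a \<and> b = b' \<and> j = c then g y * h y else 0)"
    using assms by simp
  finally show "mc_mult m (unitm X d a b g) (unitm X d b' c h) y i j =
     (if b = b' then unitm X d a c (\<lambda>y. g y * h y) else zm) y i j"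
    unfolding mc_mult_def by (auto simp: unitm_def zm_def)
qed

lemma adj_unitm: "mc_adj (unitm X d a b g) = unitm X d b a (\<lambda>y. cnj (g y))"
  unfolding mc_adj_def unitm_def by (auto simp: fun_eq_iff)

context
  fixes X :: "'a::topological_space set" and M d :: nat and \<tau> :: "'a vmat \<Rightarrow> complex"
  assumes tau: "tracial_state X M d \<tau>" and M: "M > 0"
begin

lemma tau_add: "f \<in> MC X M d \<Longrightarrow> g \<in> MC X M d \<Longrightarrow> \<tau> (mc_add f g) = \<tau> f + \<tau> g"
  using tau unfolding tracial_state_def by blast

lemma tau_scale: "f \<in> MC X M d \<Longrightarrow> \<tau> (mc_scale c f) = c * \<tau> f"
  using tau unfolding tracial_state_def by blast

lemma tau_comm: "f \<in> MC X M d \<Longrightarrow> g \<in> MC X M d \<Longrightarrow> \<tau> (mc_mult M f g) = \<tau> (mc_mult M g f)"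
  using tau unfolding tracial_state_def by blast

lemma tau_pos: "b \<in> MC X M d \<Longrightarrow> Im (\<tau> (mc_mult M (mc_adj b) b)) = 0 \<and> Re (\<tau> (mc_mult M (mc_adj b) b)) \<ge> 0"
  using tau unfolding tracial_state_def by blast

lemma tau_one: "\<tau> (mc_one X M d) = 1"
  using tau unfolding tracial_state_def by blast

lemma tau_zm: "\<tau> zm = 0"
proof -
  have e: "mc_scale 0 zm = zm" unfolding mc_scale_def zm_def by simp
  have "\<tau> zm = \<tau> (mc_scale 0 zm)" by (simp only: e)
  also have "\<dots> = 0" by (simp add: tau_scale[OF MC_zm])
  finally show ?thesis .
qed

lemma tau_sum: "finite K \<Longrightarrow> (\<And>k. k \<in> K \<Longrightarrow> F k \<in> MC X M d) \<Longrightarrow>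
    \<tau> (\<lambda>y i j. \<Sum>k\<in>K. F k y i j) = (\<Sum>k\<in>K. \<tau> (F k))"
proof (induction K rule: finite_induct)
  case empty
  then show ?case using tau_zm by (simp add: zm_def)
next
  case (insert k K)
  have "(\<lambda>y i j. \<Sum>k\<in>insert k K. F k y i j) = mc_add (F k) (\<lambda>y i j. \<Sum>k\<in>K. F k y i j)"
    using insert by (simp add: mc_add_def)
  then show ?case using insert tau_add[of "F k"] MC_sum[of K F X M d] by simp
qed

lemma tau_offdiag:
  assumes "a < M" "b < M" "a \<noteq> b" "continuous_on (Xpow X d) g"
  shows "\<tau> (unitm X d a b g) = 0"
proof -
  have c1: "continuous_on (Xpow X d) (\<lambda>_. 1::complex)" by simp
  have u1: "unitm X d a a (\<lambda>_. 1) \<in> MC X M d" using assms c1 by (intro MC_unitm) auto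
  have u2: "unitm X d a b g \<in> MC X M d" using assms by (intro MC_unitm) auto
  have "unitm X d a b g = mc_mult M (unitm X d a a (\<lambda>_. 1)) (unitm X d a b g)"
    using assms by (simp add: mult_unitm)
  then have "\<tau> (unitm X d a b g) = \<tau> (mc_mult M (unitm X d a b g) (unitm X d a a (\<lambda>_. 1)))"
    using tau_comm[OF u1 u2] by simp
  also have "\<dots> = 0" using assms by (simp add: mult_unitm tau_zm)
  finally show ?thesis .
qed

lemma tau_diag_eq:
  assumes "a < M" "b < M" "continuous_on (Xpow X d) g"
  shows "\<tau> (unitm X d a a g) = \<tau> (unitm X d b b g)"
proof -
  have c1: "continuous_on (Xpow X d) (\<lambda>_. 1::complex)" by simp
  have u1: "unitm X d b a (\<lambda>_. 1) \<in> MC X M d" using assms c1 by (intro MC_unitm) auto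
  have u2: "unitm X d a b g \<in> MC X M d" using assms by (intro MC_unitm) auto
  have "unitm X d a a g = mc_mult M (unitm X d a b g) (unitm X d b a (\<lambda>_. 1))"
    using assms by (simp add: mult_unitm)
  moreover have "unitm X d b b g = mc_mult M (unitm X d b a (\<lambda>_. 1)) (unitm X d a b g)"
    using assms by (simp add: mult_unitm)
  ultimately show ?thesis using tau_comm[OF u2 u1] by simp
qed

definition tr0 :: "((nat \<Rightarrow> 'a) \<Rightarrow> complex) \<Rightarrow> complex" where
  "tr0 g = \<tau> (unitm X d 0 0 g)"

lemma tr0_cong: "(\<And>y. y \<in> Xpow X d \<Longrightarrow> g y = h y) \<Longrightarrow> tr0 g = tr0 h"
  unfolding tr0_def by (simp add: unitm_cong[of X d g h])

lemma tau_decomp: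
  assumes x: "x \<in> MC X M d"
  shows "\<tau> x = (\<Sum>a<M. tr0 (\<lambda>y. x y a a))"
proof -
  have cx: "continuous_on (Xpow X d) (\<lambda>y. x y a b)" for a b using x unfolding MC_def by blast
  have xe: "x = (\<lambda>y i j. \<Sum>ab\<in>{..<M}\<times>{..<M}. unitm X d (fst ab) (snd ab) (\<lambda>y. x y (fst ab) (snd ab)) y i j)"
  proof (intro ext)
    fix y i j
    show "x y i j = (\<Sum>ab\<in>{..<M}\<times>{..<M}. unitm X d (fst ab) (snd ab) (\<lambda>y. x y (fst ab) (snd ab)) y i j)"
    proof (cases "y \<in> Xpow X d \<and> i < M \<and> j < M")
      case True
      have "(\<Sum>ab\<in>{..<M}\<times>{..<M}. unitm X d (fst ab) (snd ab) (\<lambda>y. x y (fst ab) (snd ab)) y i j)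
          = (\<Sum>ab\<in>{..<M}\<times>{..<M}. if ab = (i, j) then x y i j else 0)"
        by (rule sum.cong) (auto simp: unitm_def True)
      also have "\<dots> = x y i j" using True by simp
      finally show ?thesis by simp
    next
      case False
      then have "x y i j = 0" using x unfolding MC_def by auto
      moreover have "unitm X d (fst ab) (snd ab) (\<lambda>y. x y (fst ab) (snd ab)) y i j = 0"
        if "ab \<in> {..<M}\<times>{..<M}" for ab
        using False that x unfolding unitm_def MC_def by auto
      ultimately show ?thesis by simp
    qed
  qed
  have "\<tau> x = (\<Sum>ab\<in>{..<M}\<times>{..<M}. \<tau> (unitm X d (fst ab) (snd ab) (\<lambda>y. x y (fst ab) (snd ab))))"
    by (subst xe, rule tau_sum) (auto intro!: MC_unitm cx)
  also have "\<dots> = (\<Sum>a<M. \<Sum>b<M. \<tau> (unitm X d a b (\<lambda>y. x y a b)))"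
    using sum.cartesian_product[of "\<lambda>a b. \<tau> (unitm X d a b (\<lambda>y. x y a b))" "{..<M}" "{..<M}"]
    by (simp add: split_beta)
  also have "\<dots> = (\<Sum>a<M. \<tau> (unitm X d a a (\<lambda>y. x y a a)))"
  proof (rule sum.cong[OF refl])
    fix a assume a: "a \<in> {..<M}"
    have "(\<Sum>b<M. \<tau> (unitm X d a b (\<lambda>y. x y a b))) = (\<Sum>b<M. if b = a then \<tau> (unitm X d a a (\<lambda>y. x y a a)) else 0)"
      by (rule sum.cong) (use a in \<open>auto intro: tau_offdiag cx\<close>)
    also have "\<dots> = \<tau> (unitm X d a a (\<lambda>y. x y a a))" using a by simp
    finally show "(\<Sum>b<M. \<tau> (unitm X d a b (\<lambda>y. x y a b))) = \<tau> (unitm X d a a (\<lambda>y. x y a a))" .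
  qed
  also have "\<dots> = (\<Sum>a<M. tr0 (\<lambda>y. x y a a))"
    unfolding tr0_def by (rule sum.cong[OF refl]) (use M in \<open>auto intro: tau_diag_eq cx\<close>)
  finally show ?thesis .
qed

end

lemma cont_cproj: "continuous_on S (\<lambda>y. cproj d \<sigma> y)"
  unfolding cproj_def
  apply (intro continuous_on_coordinatewise_then_product)
  subgoal for i by (cases "i < d") (auto intro: continuous_on_subset[OF continuous_on_product_coordinates])
  done

lemma cont_evpt:
  fixes X :: "'a::topological_space set"
  assumes v: "valid X d0 d l" and h: "h \<in> MC X m d0"
  shows "continuous_on (Xpow X d) (\<lambda>y. h (evpt d0 y l) p q)"
proof (cases l)
  case (Inl \<sigma>)
  have hc: "continuous_on (Xpow X d0) (\<lambda>z. h z p q)" using h unfolding MC_def by blast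
  have "continuous_on (Xpow X d) (\<lambda>y. h (cproj d0 \<sigma> y) p q)"
    by (rule continuous_on_compose2[OF hc cont_cproj]) (use v Inl in \<open>auto simp: valid_def intro: cproj_Xpow\<close>)
  then show ?thesis using Inl by (simp add: evpt_def)
next
  case (Inr z) then show ?thesis by (simp add: evpt_def)
qed

lemma MC_gd:
  fixes X :: "'a::topological_space set"
  assumes h: "h \<in> MC X m d0" and v: "\<forall>l\<in>set ls. valid X d0 d l" and m: "m > 0"
  shows "gd X m d0 d ls h \<in> MC X (m * length ls) d"
proof -
  have "continuous_on (Xpow X d) (\<lambda>y. gd X m d0 d ls h y a b)" for a b
  proof (cases "a < m * length ls \<and> b < m * length ls \<and> a div m = b div m")
    case True
    then have w: "a div m < length ls" using m
      by (simp add: div_less_iff_less_mult mult.commute)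
    have "continuous_on (Xpow X d) (\<lambda>y. h (evpt d0 y (ls ! (a div m))) (a mod m) (b mod m))"
      using v w h by (intro cont_evpt) auto
    then show ?thesis by (rule continuous_on_eq) (use True in \<open>auto simp: gd_app\<close>)
  next
    case False
    show ?thesis by (rule continuous_on_eq[of _ "\<lambda>_. 0"]) (use False in \<open>auto simp: gd_app\<close>)
  qed
  then show ?thesis unfolding MC_def by (auto simp: gd_app fun_eq_iff)
qed

lemma MC_one: "mc_one X m d \<in> MC X m d"
proof -
  have "continuous_on (Xpow X d) (\<lambda>y. mc_one X m d y a b)" for a b
    by (rule continuous_on_eq[of _ "\<lambda>_. if a = b \<and> a < m then 1 else 0"]) (auto simp: mc_one_def)
  then show ?thesis unfolding MC_def by (auto simp: mc_one_def)
qed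

lemma sum_reindex_blocks: "(\<Sum>a<(m::nat) * (B::nat). F a) = (\<Sum>w<B. \<Sum>p<m. F (w * m + p))"
proof (induction B)
  case 0 then show ?case by simp
next
  case (Suc B)
  have "(\<Sum>a<m * Suc B. F a) = (\<Sum>a\<in>{0..<m * B}. F a) + (\<Sum>a\<in>{m * B..<m * B + m}. F a)"
    by (subst sum.atLeastLessThan_concat) (auto simp: lessThan_atLeast0 algebra_simps)
  also have "(\<Sum>a\<in>{m * B..<m * B + m}. F a) = (\<Sum>p<m. F (B * m + p))"
    using sum.shift_bounds_nat_ivl[of F 0 "m * B" m] by (simp add: lessThan_atLeast0 algebra_simps)
  finally show ?case using Suc by (simp add: lessThan_atLeast0)
qed

lemma sum_mset_bound:
  "(\<And>x. x \<in># A \<Longrightarrow> cmod (f x) \<le> c) \<Longrightarrow> cmod (sum_mset (image_mset f A)) \<le> real (size A) * c"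
proof (induction A rule: multiset_induct)
  case empty then show ?case by simp
next
  case (add x A)
  have "cmod (sum_mset (image_mset f (add_mset x A))) \<le> cmod (f x) + cmod (sum_mset (image_mset f A))"
    by (simp add: norm_triangle_ineq)
  also have "\<dots> \<le> c + real (size A) * c" using add by (intro add_mono) auto
  finally show ?case by (simp add: algebra_simps)
qed

context
  fixes X :: "'a::topological_space set" and M d :: nat and \<tau> :: "'a vmat \<Rightarrow> complex"
  assumes tau: "tracial_state X M d \<tau>" and M: "M > 0"
begin

lemma tr0_add: "continuous_on (Xpow X d) f \<Longrightarrow> continuous_on (Xpow X d) g \<Longrightarrow>
   tr0 X d \<tau> (\<lambda>y. f y + g y) = tr0 X d \<tau> f + tr0 X d \<tau> g"
proof -
  assume f: "continuous_on (Xpow X d) f" and g: "continuous_on (Xpow X d) g"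
  have "unitm X d 0 0 (\<lambda>y. f y + g y) = mc_add (unitm X d 0 0 f) (unitm X d 0 0 g)"
    unfolding unitm_def mc_add_def by (auto simp: fun_eq_iff)
  then show ?thesis using tau_add[OF tau M] MC_unitm[of 0 M 0 X d f] MC_unitm[of 0 M 0 X d g] M f g
    by (simp add: tr0_def[OF tau M])
qed

lemma tr0_scale: "continuous_on (Xpow X d) f \<Longrightarrow> tr0 X d \<tau> (\<lambda>y. c * f y) = c * tr0 X d \<tau> f"
proof -
  assume f: "continuous_on (Xpow X d) f"
  have "unitm X d 0 0 (\<lambda>y. c * f y) = mc_scale c (unitm X d 0 0 f)"
    unfolding unitm_def mc_scale_def by (auto simp: fun_eq_iff)
  then show ?thesis using tau_scale[OF tau M] MC_unitm[of 0 M 0 X d f] M f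
    by (simp add: tr0_def[OF tau M])
qed

lemma tr0_one: "tr0 X d \<tau> (\<lambda>_. 1) = 1 / of_nat M"
proof -
  have "1 = \<tau> (mc_one X M d)" using tau_one[OF tau M] by simp
  also have "\<dots> = (\<Sum>a<M. tr0 X d \<tau> (\<lambda>y. mc_one X M d y a a))"
    by (rule tau_decomp[OF tau M MC_one])
  also have "\<dots> = (\<Sum>a<M. tr0 X d \<tau> (\<lambda>_. 1))"
    by (rule sum.cong[OF refl], rule tr0_cong[OF tau M]) (auto simp: mc_one_def)
  finally have "1 = of_nat M * tr0 X d \<tau> (\<lambda>_. 1)" by simp
  then show ?thesis using M by (simp add: field_simps)
qed

lemma tr0_pos_aux:
  fixes gr :: "(nat \<Rightarrow> 'a) \<Rightarrow> real"
  assumes c: "continuous_on (Xpow X d) gr" and b: "\<And>y. y \<in> Xpow X d \<Longrightarrow> e * gr y \<le> 1"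
  shows "Im (tr0 X d \<tau> (\<lambda>_. 1) - of_real e * tr0 X d \<tau> (\<lambda>y. of_real (gr y))) = 0
       \<and> Re (tr0 X d \<tau> (\<lambda>_. 1) - of_real e * tr0 X d \<tau> (\<lambda>y. of_real (gr y))) \<ge> 0"
proof -
  define bb where "bb = unitm X d 0 0 (\<lambda>y. complex_of_real (sqrt (1 - e * gr y)))"
  have cb: "continuous_on (Xpow X d) (\<lambda>y. complex_of_real (sqrt (1 - e * gr y)))"
    using c by (intro continuous_intros)
  have bMC: "bb \<in> MC X M d" unfolding bb_def using M cb by (intro MC_unitm) auto
  have cg: "continuous_on (Xpow X d) (\<lambda>y. complex_of_real (gr y))" using c by (intro continuous_intros)
  have "mc_mult M (mc_adj bb) bb = unitm X d 0 0 (\<lambda>y. cnj (complex_of_real (sqrt (1 - e * gr y))) * complex_of_real (sqrt (1 - e * gr y)))"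
    unfolding bb_def adj_unitm using M by (simp add: mult_unitm)
  also have "\<dots> = unitm X d 0 0 (\<lambda>y. 1 + (- of_real e) * complex_of_real (gr y))"
  proof (rule unitm_cong)
    fix y assume "y \<in> Xpow X d"
    then have "1 - e * gr y \<ge> 0" using b by simp
    then show "cnj (complex_of_real (sqrt (1 - e * gr y))) * complex_of_real (sqrt (1 - e * gr y))
         = 1 + (- of_real e) * complex_of_real (gr y)"
      by (simp flip: of_real_mult) 
  qed
  finally have eq: "mc_mult M (mc_adj bb) bb = unitm X d 0 0 (\<lambda>y. 1 + (- of_real e) * complex_of_real (gr y))" .
  have "\<tau> (mc_mult M (mc_adj bb) bb) = tr0 X d \<tau> (\<lambda>y. 1 + (- of_real e) * complex_of_real (gr y))"
    unfolding eq tr0_def[OF tau M] by (rule refl)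
  also have "\<dots> = tr0 X d \<tau> (\<lambda>_. 1) + tr0 X d \<tau> (\<lambda>y. (- of_real e) * complex_of_real (gr y))"
    by (rule tr0_add) (simp, rule continuous_on_mult_left[OF cg])
  also have "tr0 X d \<tau> (\<lambda>y. (- of_real e) * complex_of_real (gr y)) = (- of_real e) * tr0 X d \<tau> (\<lambda>y. of_real (gr y))"
    by (rule tr0_scale[OF cg])
  finally have "\<tau> (mc_mult M (mc_adj bb) bb) = tr0 X d \<tau> (\<lambda>_. 1) - of_real e * tr0 X d \<tau> (\<lambda>y. of_real (gr y))"
    by simp
  then show ?thesis using tau_pos[OF tau M bMC] by simp
qed

lemma tr0_real_bound:
  fixes gr :: "(nat \<Rightarrow> 'a) \<Rightarrow> real"
  assumes c: "continuous_on (Xpow X d) gr" and b: "\<And>y. y \<in> Xpow X d \<Longrightarrow> \<bar>gr y\<bar> \<le> 1"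
  shows "cmod (tr0 X d \<tau> (\<lambda>y. of_real (gr y))) \<le> 1 / real M"
proof -
  have p1: "\<And>y. y \<in> Xpow X d \<Longrightarrow> 1 * gr y \<le> 1" and p2: "\<And>y. y \<in> Xpow X d \<Longrightarrow> (-1) * gr y \<le> 1"
    using b by (auto simp: abs_le_iff)
  note A = tr0_pos_aux[OF c p1] and B = tr0_pos_aux[OF c p2]
  let ?t = "tr0 X d \<tau> (\<lambda>y. of_real (gr y))"
  have one: "tr0 X d \<tau> (\<lambda>_. 1) = of_real (1 / real M)" using tr0_one by simp
  have "Im ?t = 0" using A one by simp
  moreover have "\<bar>Re ?t\<bar> \<le> 1 / real M" using A B one by auto
  ultimately show ?thesis by (simp add: cmod_def)
qed

lemma tr0_bound:
  assumes c: "continuous_on (Xpow X d) g" and b: "\<And>y. y \<in> Xpow X d \<Longrightarrow> cmod (g y) \<le> 1"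
  shows "cmod (tr0 X d \<tau> g) \<le> 2 / real M"
proof -
  have cr: "continuous_on (Xpow X d) (\<lambda>y. Re (g y))" and ci: "continuous_on (Xpow X d) (\<lambda>y. Im (g y))"
    using c by (auto intro: continuous_intros)
  have cr': "continuous_on (Xpow X d) (\<lambda>y. complex_of_real (Re (g y)))"
    and ci': "continuous_on (Xpow X d) (\<lambda>y. complex_of_real (Im (g y)))"
    using cr ci by (auto intro: continuous_intros)
  have geq: "g = (\<lambda>y. complex_of_real (Re (g y)) + \<i> * complex_of_real (Im (g y)))"
    by (simp add: fun_eq_iff complex_eq_iff)
  have "tr0 X d \<tau> g = tr0 X d \<tau> (\<lambda>y. complex_of_real (Re (g y))) + \<i> * tr0 X d \<tau> (\<lambda>y. complex_of_real (Im (g y)))"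
  proof -
    have "tr0 X d \<tau> (\<lambda>y. complex_of_real (Re (g y)) + \<i> * complex_of_real (Im (g y)))
       = tr0 X d \<tau> (\<lambda>y. complex_of_real (Re (g y))) + tr0 X d \<tau> (\<lambda>y. \<i> * complex_of_real (Im (g y)))"
      by (rule tr0_add[OF cr']) (intro continuous_on_mult_left ci')
    also have "tr0 X d \<tau> (\<lambda>y. \<i> * complex_of_real (Im (g y))) = \<i> * tr0 X d \<tau> (\<lambda>y. complex_of_real (Im (g y)))"
      by (rule tr0_scale[OF ci'])
    finally show ?thesis using arg_cong[OF geq, of "tr0 X d \<tau>"] by simp
  qed
  also have "cmod \<dots> \<le> 1 / real M + 1 / real M"
  proof (rule order_trans[OF norm_triangle_ineq], rule add_mono)
    show "cmod (tr0 X d \<tau> (\<lambda>y. complex_of_real (Re (g y)))) \<le> 1 / real M"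
      using b by (intro tr0_real_bound[OF cr]) (meson abs_Re_le_cmod order_trans)
    show "cmod (\<i> * tr0 X d \<tau> (\<lambda>y. complex_of_real (Im (g y)))) \<le> 1 / real M"
      using b by (simp add: norm_mult, intro tr0_real_bound[OF ci]) (meson abs_Im_le_cmod order_trans)
  qed
  finally show ?thesis by simp
qed

end

context
  fixes X :: "'a::topological_space set" and M d :: nat and \<tau> :: "'a vmat \<Rightarrow> complex"
  assumes tau: "tracial_state X M d \<tau>" and M: "M > 0"
begin

definition Tl :: "nat \<Rightarrow> nat \<Rightarrow> 'a vmat \<Rightarrow> 'a lab \<Rightarrow> complex" where
  "Tl m d0 h l = (\<Sum>p<m. tr0 X d \<tau> (\<lambda>y. h (evpt d0 y l) p p))"

lemma tau_gd:
  assumes MB: "M = m * length ls" and m: "m > 0" and h: "h \<in> MC X m d0"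
    and v: "\<forall>l\<in>set ls. valid X d0 d l"
  shows "\<tau> (gd X m d0 d ls h) = sum_list (map (Tl m d0 h) ls)"
proof -
  let ?L = "length ls"
  have "\<tau> (gd X m d0 d ls h) = (\<Sum>a<M. tr0 X d \<tau> (\<lambda>y. gd X m d0 d ls h y a a))"
    by (rule tau_decomp[OF tau M]) (use MC_gd[OF h v m] MB in simp)
  also have "\<dots> = (\<Sum>w<?L. \<Sum>p<m. tr0 X d \<tau> (\<lambda>y. gd X m d0 d ls h y (w * m + p) (w * m + p)))"
    unfolding MB by (rule sum_reindex_blocks)
  also have "\<dots> = (\<Sum>w<?L. Tl m d0 h (ls ! w))"
    unfolding Tl_def
  proof (rule sum.cong[OF refl], rule sum.cong[OF refl], rule tr0_cong[OF tau M])
    fix w p y assume w: "w \<in> {..<?L}" and p: "p \<in> {..<m}" and y: "y \<in> Xpow X d"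
    have lt: "w * m + p < m * ?L"
    proof -
      have "w * m + p < w * m + m" using p by simp
      also have "\<dots> = (w + 1) * m" by simp
      also have "\<dots> \<le> ?L * m" using w by (intro mult_right_mono) auto
      finally show ?thesis by (simp add: mult.commute)
    qed
    have dm: "(w * m + p) div m = w" "(w * m + p) mod m = p" using p m by auto
    show "gd X m d0 d ls h y (w * m + p) (w * m + p) = h (evpt d0 y (ls ! w)) p p"
      using lt dm y by (simp add: gd_app)
  qed
  also have "\<dots> = sum_list (map (Tl m d0 h) ls)"
    by (simp add: sum_list_sum_nth atLeast0LessThan)
  finally show ?thesis .
qed

lemma Tl_bound:
  assumes MB: "M = m * L" and m: "m > 0" and h: "h \<in> MC X m d0"
    and hb: "\<forall>y\<in>Xpow X d0. \<forall>p<m. cmod (h y p p) \<le> 1" and v: "valid X d0 d l"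
  shows "cmod (Tl m d0 h l) \<le> 2 / real L"
proof -
  have "cmod (Tl m d0 h l) \<le> (\<Sum>p<m. cmod (tr0 X d \<tau> (\<lambda>y. h (evpt d0 y l) p p)))"
    unfolding Tl_def by (rule norm_sum)
  also have "\<dots> \<le> (\<Sum>p<m. 2 / real M)"
  proof (rule sum_mono, rule tr0_bound[OF tau M])
    fix p assume p: "p \<in> {..<m}"
    show "continuous_on (Xpow X d) (\<lambda>y. h (evpt d0 y l) p p)" by (rule cont_evpt[OF v h])
    show "cmod (h (evpt d0 y l) p p) \<le> 1" if "y \<in> Xpow X d" for y
      using hb evpt_Xpow[OF v that] p by auto
  qed
  also have "\<dots> = 2 / real L" using MB m M by (simp add: field_simps)
  finally show ?thesis .
qed

lemma trace_gd_diff: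
  assumes MB: "M = m * L" and m: "m > 0" and h: "h \<in> MC X m d0"
    and hb: "\<forall>y\<in>Xpow X d0. \<forall>p<m. cmod (h y p p) \<le> 1"
    and v1: "\<forall>l\<in>set ls1. valid X d0 d l" and v2: "\<forall>l\<in>set ls2. valid X d0 d l"
    and l1: "length ls1 = L" and l2: "length ls2 = L"
    and A1: "A \<subseteq># mset ls1" and A2: "A \<subseteq># mset ls2"
  shows "cmod (\<tau> (gd X m d0 d ls1 h) - \<tau> (gd X m d0 d ls2 h)) \<le> 4 * (real L - real (size A)) / real L"
proof -
  let ?T = "Tl m d0 h"
  have sl: "sum_list (map ?T ls) = sum_mset (image_mset ?T A) + sum_mset (image_mset ?T (mset ls - A))"
    if "A \<subseteq># mset ls" for ls
  proof -
    have "sum_list (map ?T ls) = sum_mset (image_mset ?T (mset ls))"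
      by (simp add: sum_mset_sum_list[symmetric])
    also have "mset ls = A + (mset ls - A)" using that by (simp add: subset_mset.add_diff_inverse)
    finally show ?thesis by (metis image_mset_union sum_mset.union)
  qed
  have bnd: "cmod (sum_mset (image_mset ?T (mset ls - A))) \<le> real (L - size A) * (2 / real L)"
    if "A \<subseteq># mset ls" "length ls = L" "\<forall>l\<in>set ls. valid X d0 d l" for ls
  proof -
    have "cmod (sum_mset (image_mset ?T (mset ls - A))) \<le> real (size (mset ls - A)) * (2 / real L)"
    proof (rule sum_mset_bound)
      fix l assume "l \<in># mset ls - A"
      then have "l \<in> set ls" by (meson in_diffD in_multiset_in_set)
      then show "cmod (?T l) \<le> 2 / real L" using that by (intro Tl_bound[OF MB m h hb]) auto
    qed
    moreover have "size (mset ls - A) = L - size A" using that by (simp add: size_Diff_submset)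
    ultimately show ?thesis by simp
  qed
  have sA: "size A \<le> L" using A1 l1 by (metis size_mset size_mset_mono)
  have L: "L > 0" using MB M by (cases L) auto
  have "\<tau> (gd X m d0 d ls1 h) - \<tau> (gd X m d0 d ls2 h)
      = sum_mset (image_mset ?T (mset ls1 - A)) - sum_mset (image_mset ?T (mset ls2 - A))"
    using tau_gd[OF _ m h v1] tau_gd[OF _ m h v2] MB l1 l2 sl[OF A1] sl[OF A2] by simp
  also have "cmod \<dots> \<le> real (L - size A) * (2 / real L) + real (L - size A) * (2 / real L)"
    by (rule order_trans[OF norm_triangle_ineq4], rule add_mono) (use bnd A1 A2 l1 l2 v1 v2 in auto)
  also have "\<dots> = 4 * (real L - real (size A)) / real L" using sA by (simp add: of_nat_diff field_simps)
  finally show ?thesis .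
qed

end

lemma Xpow_compact:
  fixes X :: "'a::topological_space set"
  assumes "compact X" shows "compact (Xpow X d)"
proof -
  define S' where "S' i = (if i < d then X else {undefined})" for i :: nat
  have eq: "Xpow X d = PiE UNIV S'"
    unfolding Xpow_def S'_def PiE_def Pi_def extensional_def by auto
  have "compactin (product_topology (\<lambda>i. euclidean) UNIV) (PiE UNIV S')"
    unfolding compactin_PiE using assms by (auto simp: S'_def)
  then show ?thesis unfolding eq euclidean_product_topology by simp
qed

definition msum :: "nat \<Rightarrow> (nat \<Rightarrow> nat \<Rightarrow> complex) \<Rightarrow> real" where
  "msum m A = (\<Sum>a<m. \<Sum>b<m. cmod (A a b))"

lemma matset_bound:
  assumes v: "(\<Sum>b<(m::nat). (cmod (v b))\<^sup>2) \<le> 1"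
  shows "sqrt (\<Sum>a<m. (cmod (\<Sum>b<m. A a b * v b))\<^sup>2) \<le> msum m A"
proof -
  have vb: "cmod (v b) \<le> 1" if "b < m" for b
  proof -
    have "(cmod (v b))\<^sup>2 \<le> (\<Sum>b<m. (cmod (v b))\<^sup>2)"
      by (rule member_le_sum) (use that in auto)
    then have "(cmod (v b))\<^sup>2 \<le> 1\<^sup>2" using v by simp
    then show ?thesis by (rule power2_le_imp_le) simp
  qed
  have "sqrt (\<Sum>a<m. (cmod (\<Sum>b<m. A a b * v b))\<^sup>2) = L2_set (\<lambda>a. cmod (\<Sum>b<m. A a b * v b)) {..<m}"
    by (simp add: L2_set_def)
  also have "\<dots> \<le> (\<Sum>a<m. \<bar>cmod (\<Sum>b<m. A a b * v b)\<bar>)" by (rule L2_set_le_sum_abs)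
  also have "\<dots> \<le> (\<Sum>a<m. \<Sum>b<m. cmod (A a b))"
  proof (rule sum_mono)
    fix a
    have "\<bar>cmod (\<Sum>b<m. A a b * v b)\<bar> \<le> (\<Sum>b<m. cmod (A a b * v b))" by (simp add: norm_sum)
    also have "\<dots> \<le> (\<Sum>b<m. cmod (A a b))"
      by (rule sum_mono) (use vb in \<open>auto simp: norm_mult intro: mult_left_le\<close>)
    finally show "\<bar>cmod (\<Sum>b<m. A a b * v b)\<bar> \<le> (\<Sum>b<m. cmod (A a b))" .
  qed
  finally show ?thesis unfolding msum_def .
qed

lemma matset_bdd: "bdd_above {sqrt (\<Sum>a<(m::nat). (cmod (\<Sum>b<m. A a b * v b))\<^sup>2) | v. (\<Sum>b<m. (cmod (v b))\<^sup>2) \<le> 1}"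
  by (rule bdd_aboveI[of _ "msum m A"]) (auto intro: matset_bound)

lemma mat_norm_le: "mat_norm m A \<le> msum m A"
  unfolding mat_norm_def
  by (rule cSup_least) (auto intro: matset_bound exI[of _ "\<lambda>_. 0"])

lemma diag_le_mat_norm:
  assumes p: "p < m" shows "cmod (A p p) \<le> mat_norm m A"
proof -
  define v where "v b = (if b = p then 1 else 0 :: complex)" for b
  have vv: "(\<lambda>b. (cmod (v b))\<^sup>2) = (\<lambda>b. if b = p then 1 else 0)" by (auto simp: v_def fun_eq_iff)
  have v1: "(\<Sum>b<m. (cmod (v b))\<^sup>2) \<le> 1" unfolding vv using p by simp
  have sv: "(\<Sum>b<m. A a b * v b) = A a p" for a using p by (simp add: v_def if_distrib cong: if_cong)
  have "cmod (A p p) = sqrt ((cmod (A p p))\<^sup>2)" by simp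
  also have "\<dots> \<le> sqrt (\<Sum>a<m. (cmod (A a p))\<^sup>2)"
    by (rule real_sqrt_le_mono, rule member_le_sum) (use p in auto)
  also have "\<dots> = sqrt (\<Sum>a<m. (cmod (\<Sum>b<m. A a b * v b))\<^sup>2)" by (simp add: sv)
  also have "\<dots> \<le> mat_norm m A" unfolding mat_norm_def
    by (rule cSup_upper) (use v1 matset_bdd in auto)
  finally show ?thesis .
qed

lemma diag_entry_bound:
  fixes X :: "'a::topological_space set"
  assumes X: "compact X" and h: "h \<in> MC X m d" and n: "mc_norm X m d h \<le> 1"
  shows "\<forall>y\<in>Xpow X d. \<forall>p<m. cmod (h y p p) \<le> 1"
proof (intro ballI allI impI)
  fix y p assume y: "y \<in> Xpow X d" and p: "p < m"
  have c: "continuous_on (Xpow X d) (\<lambda>y. msum m (h y))"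
    unfolding msum_def using h unfolding MC_def by (auto intro!: continuous_intros)
  have "compact ((\<lambda>y. msum m (h y)) ` Xpow X d)"
    by (rule compact_continuous_image[OF c Xpow_compact[OF X]])
  then have "bdd_above ((\<lambda>y. msum m (h y)) ` Xpow X d)" by (rule bounded_imp_bdd_above[OF compact_imp_bounded])
  then obtain K where K: "\<And>y. y \<in> Xpow X d \<Longrightarrow> msum m (h y) \<le> K" by (auto simp: bdd_above_def)
  have bdd: "bdd_above ((\<lambda>y. mat_norm m (h y)) ` Xpow X d)"
    by (rule bdd_aboveI[of _ K]) (use K mat_norm_le order_trans in blast)
  have "cmod (h y p p) \<le> mat_norm m (h y)" by (rule diag_le_mat_norm[OF p])
  also have "\<dots> \<le> mc_norm X m d h" unfolding mc_norm_def by (rule cSup_upper) (use y bdd in auto)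
  finally show "cmod (h y p p) \<le> 1" using n by simp
qed

lemma eventually_prod_dvd:
  fixes fE fF :: "nat \<Rightarrow> nat"
  assumes posE: "\<forall>l\<ge>1. fE l > 0" and posF: "\<forall>l\<ge>1. fF l > 0"
    and sup: "\<forall>p. prime p \<longrightarrow> supernat fE p = supernat fF p"
  shows "eventually (\<lambda>j. (\<Prod>l\<in>{1..<i}. fE l) dvd (\<Prod>l\<in>{1..<j}. fF l)) sequentially"
proof -
  let ?P = "\<Prod>l\<in>{1..<i}. fE l"
  let ?Q = "\<lambda>j. \<Prod>l\<in>{1..<j}. fF l"
  have P0: "?P \<noteq> 0" using posE by (simp add: prod_pos)
  have mP: "multiplicity p ?P = (\<Sum>l\<in>{1..<i}. multiplicity p (fE l))" if "prime p" for p
    by (rule prime_elem_multiplicity_prod_distrib) (use that posE in \<open>auto simp: image_iff\<close>)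
  have mQ: "multiplicity p (?Q j) = (\<Sum>l\<in>{1..<j}. multiplicity p (fF l))" if "prime p" for p j
    by (rule prime_elem_multiplicity_prod_distrib) (use that posF in \<open>auto simp: image_iff\<close>)
  have ev: "\<forall>p\<in>prime_factors ?P. eventually (\<lambda>j. multiplicity p ?P \<le> multiplicity p (?Q j)) sequentially"
  proof
    fix p assume "p \<in> prime_factors ?P"
    then have p: "prime p" by auto
    define S where "S = multiplicity p ?P"
    have "enat S \<le> enat (\<Sum>l\<in>{1..i}. multiplicity p (fE l))"
      unfolding S_def mP[OF p] by (intro enat_ord_simps(1)[THEN iffD2] sum_mono2) auto
    also have "\<dots> \<le> supernat fE p" unfolding supernat_def by (rule SUP_upper) simp
    also have "\<dots> = supernat fF p" using sup p by simp
    finally have le: "enat S \<le> supernat fF p" .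
    show "eventually (\<lambda>j. multiplicity p ?P \<le> multiplicity p (?Q j)) sequentially"
    proof (cases "S = 0")
      case True then show ?thesis unfolding S_def by simp
    next
      case False
      then have "enat (S - 1) < supernat fF p" using le
        by (metis One_nat_def Suc_ile_eq Suc_pred not_gr_zero)
      then obtain N where N: "enat (S - 1) < enat (\<Sum>l\<in>{1..N}. multiplicity p (fF l))"
        unfolding supernat_def less_SUP_iff by auto
      then have SN: "S \<le> (\<Sum>l\<in>{1..N}. multiplicity p (fF l))" using False by simp
      show ?thesis unfolding eventually_sequentially
      proof (intro exI[of _ "Suc N"] allI impI)
        fix j assume j: "Suc N \<le> j"
        have "(\<Sum>l\<in>{1..N}. multiplicity p (fF l)) \<le> (\<Sum>l\<in>{1..<j}. multiplicity p (fF l))"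
          by (rule sum_mono2) (use j in auto)
        then show "multiplicity p ?P \<le> multiplicity p (?Q j)" using SN mQ[OF p] unfolding S_def by simp
      qed
    qed
  qed
  have "eventually (\<lambda>j. \<forall>p\<in>prime_factors ?P. multiplicity p ?P \<le> multiplicity p (?Q j)) sequentially"
    by (rule eventually_ball_finite[OF _ ev]) simp
  then show ?thesis
  proof (rule eventually_mono)
    fix j assume H: "\<forall>p\<in>prime_factors ?P. multiplicity p ?P \<le> multiplicity p (?Q j)"
    show "?P dvd ?Q j"
    proof (rule multiplicity_le_imp_dvd[OF P0])
      fix p :: nat assume p: "prime p"
      show "multiplicity p ?P \<le> multiplicity p (?Q j)"
      proof (cases "p \<in> prime_factors ?P")
        case True then show ?thesis using H by blast
      next
        case False
        then have "multiplicity p ?P = 0" using p by (auto simp: prime_factors_multiplicity)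
        then show ?thesis by simp
      qed
    qed
  qed
qed

lemma eventually_tail:
  fixes r :: "nat \<Rightarrow> real"
  assumes r01: "\<forall>l\<ge>1. 0 \<le> r l \<and> r l \<le> 1"
    and lim: "(\<lambda>i. lim (\<lambda>j. \<Prod>l\<in>{i..i + j}. r l)) \<longlonglongrightarrow> 1" and e: "\<epsilon> > 0"
  shows "eventually (\<lambda>j. \<forall>k>j. (\<Prod>l\<in>{j..<k}. r l) \<ge> 1 - \<epsilon>) sequentially"
proof -
  have "eventually (\<lambda>j. 1 - \<epsilon> < lim (\<lambda>J. \<Prod>l\<in>{j..j + J}. r l)) sequentially"
    using order_tendstoD(1)[OF lim] e by simp
  moreover have "eventually (\<lambda>j. j \<ge> 1) sequentially" by (rule eventually_ge_at_top)
  ultimately show ?thesis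
  proof eventually_elim
    case (elim j)
    define P where "P J = (\<Prod>l\<in>{j..j + J}. r l)" for J
    have Pn: "0 \<le> P J" "P J \<le> 1" for J unfolding P_def using r01 elim
      by (auto intro!: prod_nonneg prod_le_1)
    have dec: "decseq P"
    proof (rule decseq_SucI)
      fix J
      have "P (Suc J) = r (j + Suc J) * P J" unfolding P_def
        by (simp add: atLeastAtMostSuc_conv mult.commute)
      also have "\<dots> \<le> 1 * P J" using Pn r01 elim by (intro mult_right_mono) auto
      finally show "P (Suc J) \<le> P J" by simp
    qed
    have B: "Bseq P" by (rule BseqI'[of _ 1]) (use Pn in \<open>simp add: abs_le_iff\<close>)
    have "convergent P"
      by (rule Bseq_monoseq_convergent[OF B decseq_imp_monoseq[OF dec]])
    then have PL: "P \<longlonglongrightarrow> lim P" by (simp add: convergent_LIMSEQ_iff)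
    show ?case
    proof (intro allI impI)
      fix k assume k: "k > j"
      have "{j..<k} = {j..j + (k - j - 1)}" using k by auto
      then have "(\<Prod>l\<in>{j..<k}. r l) = P (k - j - 1)" unfolding P_def by simp
      moreover have "lim P \<le> P (k - j - 1)" by (rule decseq_ge[OF dec PL])
      ultimately show "(\<Prod>l\<in>{j..<k}. r l) \<ge> 1 - \<epsilon>" using elim unfolding P_def by simp
    qed
  qed
qed

lemma ratio_vm:
  fixes kE kF :: "nat \<Rightarrow> nat"
  assumes R: "(\<lambda>i. (\<Prod>l\<in>{1..i}. real (vn c s l + kE l)) / (\<Prod>l\<in>{1..i}. real (vn c s l + kF l))) \<longlonglongrightarrow> 1"
    and n0: "n0 \<ge> 1"
  shows "(\<lambda>j. real (vm n0 c s kE j) / real (vm n0 c s kF j)) \<longlonglongrightarrow> 1"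
    and "(\<lambda>j. real (vm n0 c s kF j) / real (vm n0 c s kE j)) \<longlonglongrightarrow> 1"
proof -
  have eq: "real (vm n0 c s kE (Suc j)) / real (vm n0 c s kF (Suc j))
     = (\<Prod>l\<in>{1..j}. real (vn c s l + kE l)) / (\<Prod>l\<in>{1..j}. real (vn c s l + kF l))" for j
  proof -
    have "{1..<Suc j} = {1..j}" by auto
    then show ?thesis unfolding vm_def using n0 by (simp add: of_nat_prod)
  qed
  show A: "(\<lambda>j. real (vm n0 c s kE j) / real (vm n0 c s kF j)) \<longlonglongrightarrow> 1"
    by (rule LIMSEQ_imp_Suc) (simp only: eq R)
  have "(\<lambda>j. inverse (real (vm n0 c s kE j) / real (vm n0 c s kF j))) \<longlonglongrightarrow> inverse 1"
    by (rule tendsto_inverse[OF A]) simp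
  then show "(\<lambda>j. real (vm n0 c s kF j) / real (vm n0 c s kE j)) \<longlonglongrightarrow> 1" by simp
qed

lemma vm_split:
  assumes "1 \<le> i" "i \<le> j"
  shows "vm n0 c s k j = vm n0 c s k i * (\<Prod>l\<in>{i..<j}. vn c s l + k l)"
proof -
  have "{1..<j} = {1..<i} \<union> {i..<j}" using assms by auto
  moreover have "{1..<i} \<inter> {i..<j} = {}" by auto
  ultimately show ?thesis unfolding vm_def by (simp add: prod.union_disjoint)
qed

lemma filter_isl_conn_labels_indep:
  "filter isl (conn_labels c s k x i) = filter isl (conn_labels c s k' x' i)"
  unfolding conn_labels_def by (simp add: comp_def)

lemma filter_isl_labs_indep:
  "filter isl (labs c s k x i j) = filter isl (labs c s k' x' i j)"
proof (induction j)
  case 0 then show ?case by simp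
next
  case (Suc j)
  then show ?case
    by (auto simp: filter_isl_cprod intro: filter_isl_conn_labels_indep
             cong: if_cong) (metis filter_isl_conn_labels_indep)+
qed

definition pslab :: "'a set \<Rightarrow> nat \<Rightarrow> (nat \<Rightarrow> nat) \<Rightarrow> (nat \<Rightarrow> nat \<Rightarrow> nat) \<Rightarrow> (nat \<Rightarrow> nat)
   \<Rightarrow> (nat \<Rightarrow> nat \<Rightarrow> nat \<Rightarrow> 'a) \<Rightarrow> (nat \<Rightarrow> nat) \<Rightarrow> nat \<Rightarrow> nat \<Rightarrow> 'a lab list" where
  "pslab X n0 c s kG xG kH i j =
     filter isl (labs c s kG xG i j)
     @ take (vm n0 c s kH j div vm n0 c s kG i - length (filter isl (labs c s kG xG i j)))
         (filter (\<lambda>l. \<not> isl l) (labs c s kG xG i j)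
          @ replicate (vm n0 c s kH j div vm n0 c s kG i) (Inr (SOME z. z \<in> Xpow X (vd c i))))"

lemma Xpow_ne: "X \<noteq> {} \<Longrightarrow> Xpow X d \<noteq> {}"
  unfolding Xpow_def by (simp add: PiE_eq_empty_iff)

lemma pslab_props:
  fixes X :: "'a set"
  assumes HG: "\<forall>l\<ge>1. c l \<ge> 1 \<and> kG l \<ge> 1 \<and> (\<forall>q\<in>{1..kG l}. xG l q \<in> Xpow X (vd c l))"
    and HH: "\<forall>l\<ge>1. c l \<ge> 1 \<and> kH l \<ge> 1 \<and> (\<forall>q\<in>{1..kH l}. xH l q \<in> Xpow X (vd c l))"
    and n0: "n0 \<ge> 1" and Xne: "X \<noteq> {}" and i1: "1 \<le> i" and ij: "i < j"
    and d1: "vm n0 c s kG i dvd vm n0 c s kH j"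
    and n1: "(\<Prod>l\<in>{i..<j}. vn c s l) * vm n0 c s kG i \<le> vm n0 c s kH j"
  shows "(\<forall>l\<in>set (pslab X n0 c s kG xG kH i j). valid X (vd c i) (vd c j) l)
    \<and> vm n0 c s kG i * length (pslab X n0 c s kG xG kH i j) = vm n0 c s kH j
    \<and> filter isl (pslab X n0 c s kG xG kH i j) = filter isl (labs c s kG xG i j)
    \<and> (\<forall>q. q \<le> vm n0 c s kH j div vm n0 c s kG i - length (filter isl (labs c s kG xG i j))
         \<longrightarrow> q \<le> length (filter (\<lambda>l. \<not> isl l) (labs c s kG xG i j))
         \<longrightarrow> mset (filter isl (labs c s kG xG i j) @ take q (filter (\<lambda>l. \<not> isl l) (labs c s kG xG i j)))
              \<subseteq># mset (pslab X n0 c s kG xG kH i j))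
    \<and> length (filter isl (labs c s kG xG i j)) \<le> vm n0 c s kH j div vm n0 c s kG i"
proof -
  let ?L = "labs c s kG xG i j"
  let ?R = "vm n0 c s kH j div vm n0 c s kG i"
  let ?N = "length (filter isl ?L)"
  let ?z = "SOME z. z \<in> Xpow X (vd c i)"
  have mpos: "vm n0 c s kG i > 0" using vm_pos[OF HG n0] .
  have LP: "(\<forall>u\<in>set ?L. valid X (vd c i) (vd c j) u) \<and> ?N = (\<Prod>l\<in>{i..<j}. vn c s l)"
    using labs_props[OF HG n0 i1] ij by auto
  have Rm: "vm n0 c s kG i * ?R = vm n0 c s kH j" using d1 by simp
  have NR: "?N \<le> ?R"
  proof -
    have "?N * vm n0 c s kG i \<le> ?R * vm n0 c s kG i" using n1 LP Rm by (simp add: mult.commute)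
    then show ?thesis using mpos by simp
  qed
  have z: "?z \<in> Xpow X (vd c i)" using Xpow_ne[OF Xne] by (simp add: some_in_eq)
  have v: "\<forall>l\<in>set (pslab X n0 c s kG xG kH i j). valid X (vd c i) (vd c j) l"
  proof
    fix l assume l: "l \<in> set (pslab X n0 c s kG xG kH i j)"
    then have "l \<in> set ?L \<or> l = Inr ?z" unfolding pslab_def
      by (auto dest: in_set_takeD)
    then show "valid X (vd c i) (vd c j) l" using LP z by (auto simp: valid_def)
  qed
  have len: "length (pslab X n0 c s kG xG kH i j) = ?R" unfolding pslab_def using NR by simp
  have fi: "filter isl (pslab X n0 c s kG xG kH i j) = filter isl ?L"
  proof -
    have "filter isl (take (?R - ?N) (filter (\<lambda>l. \<not> isl l) ?L @ replicate ?R (Inr ?z))) = []"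
      by (rule filter_False) (auto dest: in_set_takeD)
    then show ?thesis unfolding pslab_def by simp
  qed
  have sub: "mset (filter isl ?L @ take q (filter (\<lambda>l. \<not> isl l) ?L)) \<subseteq># mset (pslab X n0 c s kG xG kH i j)"
    if q1: "q \<le> ?R - ?N" and q2: "q \<le> length (filter (\<lambda>l. \<not> isl l) ?L)" for q
  proof -
    have "take q (filter (\<lambda>l. \<not> isl l) ?L) = take q (take (?R - ?N) (filter (\<lambda>l. \<not> isl l) ?L @ replicate ?R (Inr ?z)))"
      using q1 q2 by (simp add: min_def)
    then have "mset (take q (filter (\<lambda>l. \<not> isl l) ?L)) \<subseteq># mset (take (?R - ?N) (filter (\<lambda>l. \<not> isl l) ?L @ replicate ?R (Inr ?z)))"
      by (metis append_take_drop_id mset_append mset_subset_eq_add_left)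
    then show ?thesis unfolding pslab_def by simp
  qed
  show ?thesis using v len Rm fi sub NR by simp
qed

lemma psi_diag:
  fixes X :: "'a::topological_space set"
  assumes HG: "\<forall>l\<ge>1. c l \<ge> 1 \<and> kG l \<ge> 1 \<and> (\<forall>q\<in>{1..kG l}. xG l q \<in> Xpow X (vd c l))"
    and HH: "\<forall>l\<ge>1. c l \<ge> 1 \<and> kH l \<ge> 1 \<and> (\<forall>q\<in>{1..kH l}. xH l q \<in> Xpow X (vd c l))"
    and n0: "n0 \<ge> 1" and Xne: "X \<noteq> {}" and i1: "1 \<le> i" and ij: "i < j"
    and d1: "vm n0 c s kG i dvd vm n0 c s kH j"
    and n1: "(\<Prod>l\<in>{i..<j}. vn c s l) * vm n0 c s kG i \<le> vm n0 c s kH j"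
  shows "is_diagonal X (vm n0 c s kG i) (vd c i) (vm n0 c s kH j) (vd c j)
           (gd X (vm n0 c s kG i) (vd c i) (vd c j) (pslab X n0 c s kG xG kH i j))"
proof -
  note P = pslab_props[OF HG HH n0 Xne i1 ij d1 n1]
  show ?thesis unfolding is_diagonal_def
    by (rule exI, rule gd_diag_decomp[OF vm_pos[OF HG n0]]) (use P in auto)
qed

lemma pair_lemma:
  fixes X :: "'a::metric_space set"
  assumes HG: "\<forall>l\<ge>1. c l \<ge> 1 \<and> kG l \<ge> 1 \<and> (\<forall>q\<in>{1..kG l}. xG l q \<in> Xpow X (vd c l))"
    and HH: "\<forall>l\<ge>1. c l \<ge> 1 \<and> kH l \<ge> 1 \<and> (\<forall>q\<in>{1..kH l}. xH l q \<in> Xpow X (vd c l))"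
    and n0: "n0 \<ge> 1" and Xc: "compact X" and Xne: "X \<noteq> {}"
    and i1: "1 \<le> i" and ij: "i < j" and jk: "j < k"
    and d1: "vm n0 c s kG i dvd vm n0 c s kH j"
    and n1: "(\<Prod>l\<in>{i..<j}. vn c s l) * vm n0 c s kG i \<le> vm n0 c s kH j"
    and d2: "vm n0 c s kH j dvd vm n0 c s kG k"
    and n2: "(\<Prod>l\<in>{j..<k}. vn c s l) * vm n0 c s kH j \<le> vm n0 c s kG k"
    and e: "0 < \<epsilon>"
    and tail: "(\<Prod>l\<in>{j..<k}. real (vn c s l) / real (vn c s l + kG l)) \<ge> 1 - \<epsilon>"
    and rat: "real (vm n0 c s kH j) \<ge> (1 - \<epsilon>) * real (vm n0 c s kG j)"
    and \<psi>1: "\<psi>1 = gd X (vm n0 c s kG i) (vd c i) (vd c j) (pslab X n0 c s kG xG kH i j)"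
    and \<psi>2: "\<psi>2 = gd X (vm n0 c s kH j) (vd c j) (vd c k) (pslab X n0 c s kH xH kG j k)"
  shows "(\<forall>h\<in>MC X (vm n0 c s kG i) (vd c i). mc_norm X (vm n0 c s kG i) (vd c i) h \<le> 1 \<longrightarrow>
           (\<forall>\<tau>. tracial_state X (vm n0 c s kG k) (vd c k) \<tau> \<longrightarrow>
              cmod (\<tau> (\<psi>2 (\<psi>1 h)) - \<tau> (conn_maps X n0 c s kG xG i k h)) < 8 * \<epsilon>))
    \<and> (\<exists>Lam. diag_decomp X (vm n0 c s kG i) (vd c i) (vm n0 c s kG k) (vd c k) (\<psi>2 \<circ> \<psi>1) Lam
           \<and> diag_decomp X (vm n0 c s kG i) (vd c i) (vm n0 c s kG k) (vd c k) (conn_maps X n0 c s kG xG i k) Lam)"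
proof -
  let ?mGi = "vm n0 c s kG i" and ?mHj = "vm n0 c s kH j" and ?mGk = "vm n0 c s kG k" and ?mGj = "vm n0 c s kG j"
  let ?p1 = "pslab X n0 c s kG xG kH i j" and ?p2 = "pslab X n0 c s kH xH kG j k"
  let ?L1 = "labs c s kG xG i j" and ?L2 = "labs c s kG xG j k" and ?LH = "labs c s kH xH j k"
  let ?Lik = "labs c s kG xG i k"
  have j1: "1 \<le> j" using i1 ij by simp
  have mGi: "?mGi > 0" using vm_pos[OF HG n0] .
  have mGj: "?mGj > 0" using vm_pos[OF HG n0] .
  note PG1 = pslab_props[OF HG HH n0 Xne i1 ij d1 n1]
  note PH2 = pslab_props[OF HH HG n0 Xne j1 jk d2 n2]
  have LPij: "(\<forall>u\<in>set ?L1. valid X (vd c i) (vd c j) u) \<and> ?mGi * length ?L1 = ?mGj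
      \<and> length (filter isl ?L1) = (\<Prod>l\<in>{i..<j}. vn c s l)"
    using labs_props[OF HG n0 i1 Suc_leI[OF ij]] by auto
  have LPjk: "(\<forall>u\<in>set ?L2. valid X (vd c j) (vd c k) u) \<and> ?mGj * length ?L2 = ?mGk
      \<and> length (filter isl ?L2) = (\<Prod>l\<in>{j..<k}. vn c s l)"
    using labs_props[OF HG n0 j1 Suc_leI[OF jk]] by auto
  have LPik: "(\<forall>u\<in>set ?Lik. valid X (vd c i) (vd c k) u) \<and> ?mGi * length ?Lik = ?mGk
      \<and> conn_maps X n0 c s kG xG i k = gd X ?mGi (vd c i) (vd c k) ?Lik"
    using labs_props[OF HG n0 i1 Suc_leI[OF less_trans[OF ij jk]]] by auto
  have split: "?Lik = cprod (vd c i) ?L2 ?L1" by (rule labs_split[OF HG n0 i1 ij jk])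
  have vp1: "\<forall>l\<in>set ?p1. valid X (vd c i) (vd c j) l" using PG1 by blast
  have vp2: "\<forall>l\<in>set ?p2. valid X (vd c j) (vd c k) l" using PH2 by blast
  have vls1: "\<forall>l\<in>set (cprod (vd c i) ?p2 ?p1). valid X (vd c i) (vd c k) l"
    by (rule set_cprod_valid[OF vp2 vp1])
  have comp: "\<psi>2 \<circ> \<psi>1 = gd X ?mGi (vd c i) (vd c k) (cprod (vd c i) ?p2 ?p1)"
  proof
    fix f
    show "(\<psi>2 \<circ> \<psi>1) f = gd X ?mGi (vd c i) (vd c k) (cprod (vd c i) ?p2 ?p1) f"
      unfolding \<psi>1 \<psi>2 comp_def by (rule gd_comp[OF _ mGi vp2 vp1]) (use PG1 in simp)
  qed
  have e1: "?mGi * length ?p1 = ?mHj" using PG1 by blast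
  have e2: "?mHj * length ?p2 = ?mGk" using PH2 by blast
  have lenls1: "?mGi * length (cprod (vd c i) ?p2 ?p1) = ?mGk"
    by (simp only: length_cprod) (metis e1 e2 mult.assoc mult.commute)
  have fiLH: "filter isl ?LH = filter isl ?L2" by (rule filter_isl_labs_indep)
  have fcomp: "filter isl (cprod (vd c i) ?p2 ?p1) = filter isl ?Lik"
    unfolding split filter_isl_cprod using PG1 PH2 fiLH by simp
  have part2: "\<exists>Lam. diag_decomp X ?mGi (vd c i) ?mGk (vd c k) (\<psi>2 \<circ> \<psi>1) Lam
           \<and> diag_decomp X ?mGi (vd c i) ?mGk (vd c k) (conn_maps X n0 c s kG xG i k) Lam"
  proof (intro exI conjI)
    show "diag_decomp X ?mGi (vd c i) ?mGk (vd c k) (\<psi>2 \<circ> \<psi>1) (LamOf (vd c i) ?Lik)"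
      using gd_diag_decomp[OF mGi vls1 lenls1[symmetric]] unfolding comp LamOf_def fcomp .
    show "diag_decomp X ?mGi (vd c i) ?mGk (vd c k) (conn_maps X n0 c s kG xG i k) (LamOf (vd c i) ?Lik)"
      unfolding conjunct2[OF conjunct2[OF LPik]] by (rule gd_diag_decomp[OF mGi]) (use LPik in auto)
  qed
  let ?R = "?mHj div ?mGi" and ?N = "length (filter isl ?L1)" and ?P = "length (filter (\<lambda>l. \<not> isl l) ?L1)"
  define q where "q = min (?R - ?N) ?P"
  define C0 where "C0 = filter isl ?L1 @ take q (filter (\<lambda>l. \<not> isl l) ?L1)"
  define A where "A = mset (cprod (vd c i) (filter isl ?L2) C0)"
  let ?B = "length ?Lik"
  have NR: "?N \<le> ?R" using PG1 by blast
  have Rm: "?mGi * ?R = ?mHj" using d1 by simp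
  have b1: "length ?L1 = ?N + ?P" by (simp add: sum_length_filter_compl)
  have C0p1: "mset C0 \<subseteq># mset ?p1" unfolding C0_def q_def using PG1 by simp
  have C0L1: "mset C0 \<subseteq># mset ?L1"
  proof -
    have "mset (take q (filter (\<lambda>l. \<not> isl l) ?L1)) \<subseteq># mset (filter (\<lambda>l. \<not> isl l) ?L1)"
      by (metis append_take_drop_id mset_append mset_subset_eq_add_left)
    then have "mset C0 \<subseteq># mset (filter isl ?L1) + mset (filter (\<lambda>l. \<not> isl l) ?L1)"
      unfolding C0_def mset_append by (rule subset_mset.add_left_mono)
    also have "\<dots> = mset ?L1" by (simp only: mset_filter multiset_partition[symmetric])
    finally show ?thesis .
  qed
  have fL2p2: "mset (filter isl ?L2) \<subseteq># mset ?p2"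
  proof -
    have "filter isl ?L2 = filter isl ?p2" using PH2 fiLH by simp
    then show ?thesis by (metis mset_filter multiset_filter_subset)
  qed
  have fL2L2: "mset (filter isl ?L2) \<subseteq># mset ?L2" by (metis mset_filter multiset_filter_subset)
  have A1: "A \<subseteq># mset (cprod (vd c i) ?p2 ?p1)" unfolding A_def by (rule mset_cprod_mono[OF fL2p2 C0p1])
  have A2: "A \<subseteq># mset ?Lik" unfolding A_def split by (rule mset_cprod_mono[OF fL2L2 C0L1])
  have sizeA: "size A = length (filter isl ?L2) * (?N + q)"
    unfolding A_def C0_def q_def by simp
  have B: "?B = length ?L2 * length ?L1" unfolding split by simp
  have mGk: "?mGk > 0" by (rule vm_pos[OF HG n0])
  have Bpos: "?B > 0" using LPik mGk by (cases ?B) auto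
  have r1: "real (length (filter isl ?L2)) / real (length ?L2) \<ge> 1 - \<epsilon>"
  proof -
    have "?mGk = ?mGj * (\<Prod>l\<in>{j..<k}. vn c s l + kG l)" by (rule vm_split[OF j1]) (use jk in simp)
    then have "length ?L2 = (\<Prod>l\<in>{j..<k}. vn c s l + kG l)" using LPjk mGj by simp
    then have "real (length (filter isl ?L2)) / real (length ?L2)
        = (\<Prod>l\<in>{j..<k}. real (vn c s l)) / (\<Prod>l\<in>{j..<k}. real (vn c s l + kG l))"
      using LPjk by (simp add: of_nat_prod)
    also have "\<dots> = (\<Prod>l\<in>{j..<k}. real (vn c s l) / real (vn c s l + kG l))"
      by (simp add: prod_dividef)
    finally show ?thesis using tail by simp
  qed
  have r2: "real (?N + q) / real (length ?L1) \<ge> 1 - \<epsilon>"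
  proof (cases "?R \<ge> length ?L1")
    case True
    then have "?N + q = length ?L1" unfolding q_def using b1 NR by auto
    moreover have "length ?L1 > 0" using LPij mGj by (cases "length ?L1") auto
    ultimately show ?thesis using e by simp
  next
    case False
    then have "?N + q = ?R" unfolding q_def using b1 NR by auto
    moreover have "real ?R / real (length ?L1) = real ?mHj / real ?mGj"
    proof -
      have "real ?mHj = real ?mGi * real ?R" using Rm by (metis of_nat_mult)
      moreover have "real ?mGj = real ?mGi * real (length ?L1)" using LPij by (metis of_nat_mult)
      ultimately show ?thesis using mGi by simp
    qed
    moreover have "real ?mHj / real ?mGj \<ge> 1 - \<epsilon>" using rat mGj by (simp add: field_simps)
    ultimately show ?thesis by simp
  qed
  have frac: "real (size A) / real ?B = (real (length (filter isl ?L2)) / real (length ?L2)) * (real (?N + q) / real (length ?L1))"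
    unfolding sizeA B by simp
  have bound: "4 * (real ?B - real (size A)) / real ?B < 8 * \<epsilon>"
  proof -
    have eq: "4 * (real ?B - real (size A)) / real ?B = 4 - 4 * (real (size A) / real ?B)"
      using Bpos by (simp add: field_simps)
    show ?thesis
    proof (cases "\<epsilon> > 1/2")
      case True
      have "real (size A) / real ?B \<ge> 0" by simp
      then show ?thesis unfolding eq using True by linarith
    next
      case False
      have "(1 - \<epsilon>) * (1 - \<epsilon>) \<le> real (size A) / real ?B"
        unfolding frac by (rule mult_mono[OF r1 r2]) (use False in auto)
      then have h': "1 - 2 * \<epsilon> + \<epsilon> * \<epsilon> \<le> real (size A) / real ?B" by (simp add: algebra_simps)
      have "\<epsilon> * \<epsilon> > 0" using e by simp
      then show ?thesis unfolding eq using h' by linarith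
    qed
  qed
  have part1: "\<forall>h\<in>MC X ?mGi (vd c i). mc_norm X ?mGi (vd c i) h \<le> 1 \<longrightarrow>
           (\<forall>\<tau>. tracial_state X ?mGk (vd c k) \<tau> \<longrightarrow>
              cmod (\<tau> (\<psi>2 (\<psi>1 h)) - \<tau> (conn_maps X n0 c s kG xG i k h)) < 8 * \<epsilon>)"
  proof (intro ballI impI allI)
    fix h \<tau> assume h: "h \<in> MC X ?mGi (vd c i)" and hn: "mc_norm X ?mGi (vd c i) h \<le> 1"
      and tau: "tracial_state X ?mGk (vd c k) \<tau>"
    have hb: "\<forall>y\<in>Xpow X (vd c i). \<forall>p<?mGi. cmod (h y p p) \<le> 1" by (rule diag_entry_bound[OF Xc h hn])
    have Mpos: "?mGk > 0" using vm_pos[OF HG n0] .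
    have lenEq: "length (cprod (vd c i) ?p2 ?p1) = ?B"
      using lenls1 LPik mGi by (metis mult_left_cancel less_not_refl)
    have "\<psi>2 (\<psi>1 h) = gd X ?mGi (vd c i) (vd c k) (cprod (vd c i) ?p2 ?p1) h"
      using comp by (metis comp_apply)
    moreover have "conn_maps X n0 c s kG xG i k h = gd X ?mGi (vd c i) (vd c k) ?Lik h" using LPik by simp
    moreover have "cmod (\<tau> (gd X ?mGi (vd c i) (vd c k) (cprod (vd c i) ?p2 ?p1) h) - \<tau> (gd X ?mGi (vd c i) (vd c k) ?Lik h))
        \<le> 4 * (real ?B - real (size A)) / real ?B"
      by (rule trace_gd_diff[OF tau Mpos, where L = ?B and m = ?mGi])
         (use LPik mGi h hb vls1 lenEq A1 A2 in auto)
    ultimately show "cmod (\<tau> (\<psi>2 (\<psi>1 h)) - \<tau> (conn_maps X n0 c s kG xG i k h)) < 8 * \<epsilon>"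
      using bound by simp
  qed
  show ?thesis using part1 part2 by blast
qed

definition StepC :: "'a set \<Rightarrow> nat \<Rightarrow> (nat \<Rightarrow> nat) \<Rightarrow> (nat \<Rightarrow> nat \<Rightarrow> nat) \<Rightarrow> (nat \<Rightarrow> nat) \<Rightarrow> (nat \<Rightarrow> nat)
    \<Rightarrow> real \<Rightarrow> nat \<Rightarrow> nat \<Rightarrow> bool" where
  "StepC X n0 c s kG kH \<epsilon> i j \<longleftrightarrow> i < j \<and> vm n0 c s kG i dvd vm n0 c s kH j
     \<and> (\<Prod>l\<in>{i..<j}. vn c s l) * vm n0 c s kG i \<le> vm n0 c s kH j
     \<and> real (vm n0 c s kH j) \<ge> (1 - \<epsilon>) * real (vm n0 c s kG j)
     \<and> (\<forall>k>j. (\<Prod>l\<in>{j..<k}. real (vn c s l) / real (vn c s l + kG l)) \<ge> 1 - \<epsilon>)"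

lemma step_exists:
  fixes X :: "'a set"
  assumes HG: "\<forall>l\<ge>1. c l \<ge> 1 \<and> kG l \<ge> 1 \<and> (\<forall>q\<in>{1..kG l}. xG l q \<in> Xpow X (vd c l))"
    and HH: "\<forall>l\<ge>1. c l \<ge> 1 \<and> kH l \<ge> 1 \<and> (\<forall>q\<in>{1..kH l}. xH l q \<in> Xpow X (vd c l))"
    and n0: "n0 \<ge> 1"
    and bG: "(\<lambda>i. lim (\<lambda>j. \<Prod>l\<in>{i..i + j}. real (vn c s l) / real (vn c s l + kG l))) \<longlonglongrightarrow> 1"
    and rat: "(\<lambda>j. real (vm n0 c s kH j) / real (vm n0 c s kG j)) \<longlonglongrightarrow> 1"
    and sup: "\<forall>p. prime p \<longrightarrow> supernat (\<lambda>l. vn c s l + kG l) p = supernat (\<lambda>l. vn c s l + kH l) p"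
    and e: "\<epsilon> > 0" and i1: "i \<ge> 1"
  shows "\<exists>j. StepC X n0 c s kG kH \<epsilon> i j"
proof -
  let ?r = "\<lambda>l. real (vn c s l) / real (vn c s l + kG l)"
  define \<eta> where "\<eta> = min \<epsilon> (1 / real (vn c s i + 1))"
  have \<eta>: "\<eta> > 0" unfolding \<eta>_def using e by simp
  have e1: "eventually (\<lambda>j. vm n0 c s kG i dvd vm n0 c s kH j) sequentially"
  proof -
    have "eventually (\<lambda>j. (\<Prod>l\<in>{1..<i}. vn c s l + kG l) dvd (\<Prod>l\<in>{1..<j}. vn c s l + kH l)) sequentially"
      by (rule eventually_prod_dvd) (use HG HH sup in auto)
    then show ?thesis unfolding vm_def by eventually_elim (rule mult_dvd_mono, auto)
  qed
  have e2: "eventually (\<lambda>j. 1 - \<eta> < real (vm n0 c s kH j) / real (vm n0 c s kG j)) sequentially"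
    using order_tendstoD(1)[OF rat] \<eta> by simp
  have e3: "eventually (\<lambda>j. \<forall>k>j. (\<Prod>l\<in>{j..<k}. ?r l) \<ge> 1 - \<epsilon>) sequentially"
    by (rule eventually_tail[OF _ bG e]) (auto simp: divide_le_eq_1)
  have e4: "eventually (\<lambda>j. i < j) sequentially" by (rule eventually_gt_at_top)
  have "eventually (\<lambda>j. StepC X n0 c s kG kH \<epsilon> i j) sequentially"
    using e1 e2 e3 e4
  proof eventually_elim
    case (elim j)
    have mGj: "vm n0 c s kG j > 0" using vm_pos[OF HG n0] .
    have ri: "?r i \<le> 1 - 1 / real (vn c s i + 1)"
    proof -
      have "kG i \<ge> 1" using HG i1 by auto
      then have "?r i \<le> real (vn c s i) / real (vn c s i + 1)"
        by (intro divide_left_mono) auto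
      also have "\<dots> = 1 - 1 / real (vn c s i + 1)" by (simp add: field_simps)
      finally show ?thesis .
    qed
    have rle: "0 \<le> ?r l \<and> ?r l \<le> 1" for l by (auto simp: divide_le_eq_1)
    have "(\<Prod>l\<in>{i..<j}. ?r l) = ?r i * (\<Prod>l\<in>{Suc i..<j}. ?r l)"
      using elim by (simp add: prod.atLeast_Suc_lessThan)
    also have "\<dots> \<le> ?r i * 1"
      by (rule mult_left_mono) (use rle in \<open>auto intro!: prod_le_1\<close>)
    finally have pr: "(\<Prod>l\<in>{i..<j}. ?r l) \<le> 1 - \<eta>" using ri unfolding \<eta>_def by linarith
    have vs: "vm n0 c s kG j = vm n0 c s kG i * (\<Prod>l\<in>{i..<j}. vn c s l + kG l)"
      by (rule vm_split[OF i1]) (use elim in simp)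
    have "real ((\<Prod>l\<in>{i..<j}. vn c s l) * vm n0 c s kG i)
        = real (vm n0 c s kG j) * (\<Prod>l\<in>{i..<j}. ?r l)"
    proof -
      have "\<forall>l\<in>{i..<j}. kG l \<ge> 1" using HG i1 by auto
      then have pos: "(\<Prod>l\<in>{i..<j}. real (vn c s l + kG l)) \<noteq> 0"
        by (auto simp: prod_zero_iff)
      show ?thesis unfolding vs using pos by (simp add: of_nat_prod prod_dividef)
    qed
    also have "\<dots> \<le> real (vm n0 c s kG j) * (1 - \<eta>)" using pr mGj by (intro mult_left_mono) auto
    also have "\<dots> \<le> real (vm n0 c s kH j)" using elim(2) mGj by (simp add: field_simps)
    finally have n1: "(\<Prod>l\<in>{i..<j}. vn c s l) * vm n0 c s kG i \<le> vm n0 c s kH j" by linarith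
    have "(1 - \<epsilon>) * real (vm n0 c s kG j) \<le> (1 - \<eta>) * real (vm n0 c s kG j)"
      unfolding \<eta>_def by (intro mult_right_mono) auto
    also have "\<dots> \<le> real (vm n0 c s kH j)" using elim(2) mGj by (simp add: field_simps)
    finally show ?case unfolding StepC_def using elim n1 by auto
  qed
  then show ?thesis by (metis eventually_sequentially order_refl)
qed

theorem lemma4p6:
  fixes X :: "'a::metric_space set" and n0 :: nat and c :: "nat \<Rightarrow> nat"
    and s :: "nat \<Rightarrow> nat \<Rightarrow> nat" and kE kF :: "nat \<Rightarrow> nat"
    and xE xF :: "nat \<Rightarrow> nat \<Rightarrow> nat \<Rightarrow> 'a" and \<delta> :: "nat \<Rightarrow> real"
  assumes dataE: "villadsen_data X n0 c s kE xE"
    and dataF: "villadsen_data X n0 c s kF xF"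
    and supernat_eq: "\<forall>p. prime p \<longrightarrow>
          supernat (\<lambda>l. vn c s l + kE l) p = supernat (\<lambda>l. vn c s l + kF l) p"
    and ratio: "(\<lambda>i. (\<Prod>l\<in>{1..i}. real (vn c s l + kE l)) / (\<Prod>l\<in>{1..i}. real (vn c s l + kF l)))
                  \<longlonglongrightarrow> 1"
    and \<delta>_dec: "\<forall>t. \<delta> (Suc t) < \<delta> t" and \<delta>_pos: "\<forall>t. 0 < \<delta> t"
    and \<delta>_sum: "summable \<delta>" "suminf \<delta> < 1"
  shows "\<exists>idx :: nat \<Rightarrow> nat. \<exists>\<psi> :: nat \<Rightarrow> 'a vmat \<Rightarrow> 'a vmat.
     idx 0 = 1 \<and> strict_mono idx
   \<and> (\<forall>t. even t \<longrightarrow>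
        is_diagonal X (vm n0 c s kE (idx t)) (vd c (idx t))
                      (vm n0 c s kF (idx (Suc t))) (vd c (idx (Suc t))) (\<psi> t))
   \<and> (\<forall>t. odd t \<longrightarrow>
        is_diagonal X (vm n0 c s kF (idx t)) (vd c (idx t))
                      (vm n0 c s kE (idx (Suc t))) (vd c (idx (Suc t))) (\<psi> t))
   \<and> (\<forall>t. even t \<longrightarrow>
        (\<forall>h\<in>MC X (vm n0 c s kE (idx t)) (vd c (idx t)).
           mc_norm X (vm n0 c s kE (idx t)) (vd c (idx t)) h \<le> 1 \<longrightarrow>
           (\<forall>\<tau>. tracial_state X (vm n0 c s kE (idx (t + 2))) (vd c (idx (t + 2))) \<tau> \<longrightarrow>
              cmod (\<tau> (\<psi> (Suc t) (\<psi> t h)) - \<tau> (conn_maps X n0 c s kE xE (idx t) (idx (t + 2)) h))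
                < \<delta> t)))
   \<and> (\<forall>t. odd t \<longrightarrow>
        (\<forall>h\<in>MC X (vm n0 c s kF (idx t)) (vd c (idx t)).
           mc_norm X (vm n0 c s kF (idx t)) (vd c (idx t)) h \<le> 1 \<longrightarrow>
           (\<forall>\<tau>. tracial_state X (vm n0 c s kF (idx (t + 2))) (vd c (idx (t + 2))) \<tau> \<longrightarrow>
              cmod (\<tau> (\<psi> (Suc t) (\<psi> t h)) - \<tau> (conn_maps X n0 c s kF xF (idx t) (idx (t + 2)) h))
                < \<delta> t)))
   \<and> (\<forall>t. even t \<longrightarrow> (\<exists>Lam.
        diag_decomp X (vm n0 c s kE (idx t)) (vd c (idx t))
                      (vm n0 c s kE (idx (t + 2))) (vd c (idx (t + 2))) (\<psi> (Suc t) \<circ> \<psi> t) Lam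
      \<and> diag_decomp X (vm n0 c s kE (idx t)) (vd c (idx t))
                      (vm n0 c s kE (idx (t + 2))) (vd c (idx (t + 2)))
                      (conn_maps X n0 c s kE xE (idx t) (idx (t + 2))) Lam))
   \<and> (\<forall>t. odd t \<longrightarrow> (\<exists>Lam.
        diag_decomp X (vm n0 c s kF (idx t)) (vd c (idx t))
                      (vm n0 c s kF (idx (t + 2))) (vd c (idx (t + 2))) (\<psi> (Suc t) \<circ> \<psi> t) Lam
      \<and> diag_decomp X (vm n0 c s kF (idx t)) (vd c (idx t))
                      (vm n0 c s kF (idx (t + 2))) (vd c (idx (t + 2)))
                      (conn_maps X n0 c s kF xF (idx t) (idx (t + 2))) Lam))"
proof -
  have Xc: "compact X" and n0: "n0 \<ge> 1"
    and DE: "\<forall>i\<ge>1. c i \<ge> 1 \<and> kE i \<ge> 1 \<and> (\<forall>j\<in>{1..c i}. s i j \<ge> 1)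
         \<and> (\<forall>l\<in>{1..kE i}. xE i l \<in> Xpow X (vd c i))"
    and bE: "(\<lambda>i. lim (\<lambda>j. \<Prod>l\<in>{i..i + j}. real (vn c s l) / real (vn c s l + kE l))) \<longlonglongrightarrow> 1"
    using dataE unfolding villadsen_data_def by blast+
  have DF: "\<forall>i\<ge>1. c i \<ge> 1 \<and> kF i \<ge> 1 \<and> (\<forall>j\<in>{1..c i}. s i j \<ge> 1)
         \<and> (\<forall>l\<in>{1..kF i}. xF i l \<in> Xpow X (vd c i))"
    and bF: "(\<lambda>i. lim (\<lambda>j. \<Prod>l\<in>{i..i + j}. real (vn c s l) / real (vn c s l + kF l))) \<longlonglongrightarrow> 1"
    using dataF unfolding villadsen_data_def by blast+
  have HE: "\<forall>l\<ge>1. c l \<ge> 1 \<and> kE l \<ge> 1 \<and> (\<forall>q\<in>{1..kE l}. xE l q \<in> Xpow X (vd c l))"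
    using DE by blast
  have HF: "\<forall>l\<ge>1. c l \<ge> 1 \<and> kF l \<ge> 1 \<and> (\<forall>q\<in>{1..kF l}. xF l q \<in> Xpow X (vd c l))"
    using DF by blast
  have Xne: "X \<noteq> {}"
  proof
    assume X0: "X = {}"
    have x: "xE 1 1 \<in> Xpow X (vd c 1)" using HE by auto
    have "vd c 1 = 1" unfolding vd_def by simp
    then have "Xpow X (vd c 1) = {}" using X0 by (simp add: Xpow_def PiE_eq_empty_iff)
    then show False using x by simp
  qed
  note RV = ratio_vm[OF ratio n0]
  have supF: "\<forall>p. prime p \<longrightarrow> supernat (\<lambda>l. vn c s l + kF l) p = supernat (\<lambda>l. vn c s l + kE l) p"
    using supernat_eq by simp
  define Good where "Good t i j = (if even t then StepC X n0 c s kE kF (\<delta> t / 8) i j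
       else StepC X n0 c s kF kE (\<delta> t / 8) i j)" for t i j
  have ex: "\<exists>j. Good t i j" if "i \<ge> 1" for t i
  proof (cases "even t")
    case True
    have "\<exists>j. StepC X n0 c s kE kF (\<delta> t / 8) i j"
      by (rule step_exists[OF HE HF n0 bE RV(2) supernat_eq]) (use \<delta>_pos that in auto)
    then show ?thesis unfolding Good_def using True by simp
  next
    case False
    have "\<exists>j. StepC X n0 c s kF kE (\<delta> t / 8) i j"
      by (rule step_exists[OF HF HE n0 bF RV(1) supF]) (use \<delta>_pos that in auto)
    then show ?thesis unfolding Good_def using False by simp
  qed
  define idx where "idx = rec_nat 1 (\<lambda>t i. SOME j. Good t i j)"
  have idx0: "idx 0 = 1" unfolding idx_def by simp
  have idxS: "idx (Suc t) = (SOME j. Good t (idx t) j)" for t unfolding idx_def by simp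
  have I: "idx t \<ge> 1 \<and> Good t (idx t) (idx (Suc t))" for t
  proof (induction t)
    case 0
    show ?case using someI_ex[OF ex[of 1 0]] by (simp add: idx0 idxS)
  next
    case (Suc t)
    have "idx t < idx (Suc t)" using Suc unfolding Good_def StepC_def by (auto split: if_splits)
    then have "idx (Suc t) \<ge> 1" using Suc by simp
    then show ?case using someI_ex[OF ex[of "idx (Suc t)" "Suc t"]] by (simp add: idxS)
  qed
  have SE: "StepC X n0 c s kE kF (\<delta> t / 8) (idx t) (idx (Suc t))" if "even t" for t
    using I[of t] that unfolding Good_def by simp
  have SF: "StepC X n0 c s kF kE (\<delta> t / 8) (idx t) (idx (Suc t))" if "odd t" for t
    using I[of t] that unfolding Good_def by simp
  define \<psi> where "\<psi> t = (if even t then gd X (vm n0 c s kE (idx t)) (vd c (idx t)) (vd c (idx (Suc t)))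
        (pslab X n0 c s kE xE kF (idx t) (idx (Suc t)))
      else gd X (vm n0 c s kF (idx t)) (vd c (idx t)) (vd c (idx (Suc t)))
        (pslab X n0 c s kF xF kE (idx t) (idx (Suc t))))" for t
  have smono: "strict_mono idx"
  proof (rule strict_monoI_Suc)
    fix t show "idx t < idx (Suc t)" using I[of t] unfolding Good_def StepC_def by (auto split: if_splits)
  qed
  have C3: "\<forall>t. even t \<longrightarrow>
        is_diagonal X (vm n0 c s kE (idx t)) (vd c (idx t))
                      (vm n0 c s kF (idx (Suc t))) (vd c (idx (Suc t))) (\<psi> t)"
  proof (intro allI impI)
    fix t :: nat assume t: "even t"
    note S = SE[OF t]
    show "is_diagonal X (vm n0 c s kE (idx t)) (vd c (idx t))
                      (vm n0 c s kF (idx (Suc t))) (vd c (idx (Suc t))) (\<psi> t)"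
      unfolding \<psi>_def using t
      by (simp, intro psi_diag[OF HE HF n0 Xne]) (use I[of t] S in \<open>auto simp: StepC_def\<close>)
  qed
  have C4: "\<forall>t. odd t \<longrightarrow>
        is_diagonal X (vm n0 c s kF (idx t)) (vd c (idx t))
                      (vm n0 c s kE (idx (Suc t))) (vd c (idx (Suc t))) (\<psi> t)"
  proof (intro allI impI)
    fix t :: nat assume t: "odd t"
    note S = SF[OF t]
    show "is_diagonal X (vm n0 c s kF (idx t)) (vd c (idx t))
                      (vm n0 c s kE (idx (Suc t))) (vd c (idx (Suc t))) (\<psi> t)"
      unfolding \<psi>_def using t
      by (simp, intro psi_diag[OF HF HE n0 Xne]) (use I[of t] S in \<open>auto simp: StepC_def\<close>)
  qed
  have PE: "(\<forall>h\<in>MC X (vm n0 c s kE (idx t)) (vd c (idx t)).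
           mc_norm X (vm n0 c s kE (idx t)) (vd c (idx t)) h \<le> 1 \<longrightarrow>
           (\<forall>\<tau>. tracial_state X (vm n0 c s kE (idx (t + 2))) (vd c (idx (t + 2))) \<tau> \<longrightarrow>
              cmod (\<tau> (\<psi> (Suc t) (\<psi> t h)) - \<tau> (conn_maps X n0 c s kE xE (idx t) (idx (t + 2)) h))
                < 8 * (\<delta> t / 8)))
    \<and> (\<exists>Lam.
        diag_decomp X (vm n0 c s kE (idx t)) (vd c (idx t))
                      (vm n0 c s kE (idx (t + 2))) (vd c (idx (t + 2))) (\<psi> (Suc t) \<circ> \<psi> t) Lam
      \<and> diag_decomp X (vm n0 c s kE (idx t)) (vd c (idx t))
                      (vm n0 c s kE (idx (t + 2))) (vd c (idx (t + 2)))
                      (conn_maps X n0 c s kE xE (idx t) (idx (t + 2))) Lam)"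
    if t: "even t" for t
  proof (rule pair_lemma[OF HE HF n0 Xc Xne])
    have t2: "t + 2 = Suc (Suc t)" by simp
    note S1 = SE[OF t] and S2 = SF[of "Suc t"]
    have ot: "odd (Suc t)" using t by simp
    show "1 \<le> idx t" using I by blast
    show "idx t < idx (Suc t)" using S1 unfolding StepC_def by blast
    show "idx (Suc t) < idx (t + 2)" using S2[OF ot] unfolding StepC_def t2 by blast
    show "vm n0 c s kE (idx t) dvd vm n0 c s kF (idx (Suc t))" using S1 unfolding StepC_def by blast
    show "(\<Prod>l\<in>{idx t..<idx (Suc t)}. vn c s l) * vm n0 c s kE (idx t) \<le> vm n0 c s kF (idx (Suc t))"
      using S1 unfolding StepC_def by blast
    show "vm n0 c s kF (idx (Suc t)) dvd vm n0 c s kE (idx (t + 2))" using S2[OF ot] unfolding StepC_def t2 by blast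
    show "(\<Prod>l\<in>{idx (Suc t)..<idx (t + 2)}. vn c s l) * vm n0 c s kF (idx (Suc t)) \<le> vm n0 c s kE (idx (t + 2))"
      using S2[OF ot] unfolding StepC_def t2 by blast
    show "0 < \<delta> t / 8" using \<delta>_pos by simp
    have "idx (Suc t) < idx (t + 2)" using S2[OF ot] unfolding StepC_def t2 by blast
    then show "1 - \<delta> t / 8 \<le> (\<Prod>l\<in>{idx (Suc t)..<idx (t + 2)}. real (vn c s l) / real (vn c s l + kE l))"
      using S1 unfolding StepC_def by blast
    show "(1 - \<delta> t / 8) * real (vm n0 c s kE (idx (Suc t))) \<le> real (vm n0 c s kF (idx (Suc t)))"
      using S1 unfolding StepC_def by blast
    show "\<psi> t = gd X (vm n0 c s kE (idx t)) (vd c (idx t)) (vd c (idx (Suc t))) (pslab X n0 c s kE xE kF (idx t) (idx (Suc t)))"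
      unfolding \<psi>_def using t by simp
    show "\<psi> (Suc t) = gd X (vm n0 c s kF (idx (Suc t))) (vd c (idx (Suc t))) (vd c (idx (t + 2))) (pslab X n0 c s kF xF kE (idx (Suc t)) (idx (t + 2)))"
      unfolding \<psi>_def t2 using ot by simp
  qed
  have PF: "(\<forall>h\<in>MC X (vm n0 c s kF (idx t)) (vd c (idx t)).
           mc_norm X (vm n0 c s kF (idx t)) (vd c (idx t)) h \<le> 1 \<longrightarrow>
           (\<forall>\<tau>. tracial_state X (vm n0 c s kF (idx (t + 2))) (vd c (idx (t + 2))) \<tau> \<longrightarrow>
              cmod (\<tau> (\<psi> (Suc t) (\<psi> t h)) - \<tau> (conn_maps X n0 c s kF xF (idx t) (idx (t + 2)) h))
                < 8 * (\<delta> t / 8)))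
    \<and> (\<exists>Lam.
        diag_decomp X (vm n0 c s kF (idx t)) (vd c (idx t))
                      (vm n0 c s kF (idx (t + 2))) (vd c (idx (t + 2))) (\<psi> (Suc t) \<circ> \<psi> t) Lam
      \<and> diag_decomp X (vm n0 c s kF (idx t)) (vd c (idx t))
                      (vm n0 c s kF (idx (t + 2))) (vd c (idx (t + 2)))
                      (conn_maps X n0 c s kF xF (idx t) (idx (t + 2))) Lam)"
    if t: "odd t" for t
  proof (rule pair_lemma[OF HF HE n0 Xc Xne])
    have t2: "t + 2 = Suc (Suc t)" by simp
    note S1 = SF[OF t] and S2 = SE[of "Suc t"]
    have ot: "even (Suc t)" using t by simp
    show "1 \<le> idx t" using I by blast
    show "idx t < idx (Suc t)" using S1 unfolding StepC_def by blast
    show "idx (Suc t) < idx (t + 2)" using S2[OF ot] unfolding StepC_def t2 by blast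
    show "vm n0 c s kF (idx t) dvd vm n0 c s kE (idx (Suc t))" using S1 unfolding StepC_def by blast
    show "(\<Prod>l\<in>{idx t..<idx (Suc t)}. vn c s l) * vm n0 c s kF (idx t) \<le> vm n0 c s kE (idx (Suc t))"
      using S1 unfolding StepC_def by blast
    show "vm n0 c s kE (idx (Suc t)) dvd vm n0 c s kF (idx (t + 2))" using S2[OF ot] unfolding StepC_def t2 by blast
    show "(\<Prod>l\<in>{idx (Suc t)..<idx (t + 2)}. vn c s l) * vm n0 c s kE (idx (Suc t)) \<le> vm n0 c s kF (idx (t + 2))"
      using S2[OF ot] unfolding StepC_def t2 by blast
    show "0 < \<delta> t / 8" using \<delta>_pos by simp
    have "idx (Suc t) < idx (t + 2)" using S2[OF ot] unfolding StepC_def t2 by blast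
    then show "1 - \<delta> t / 8 \<le> (\<Prod>l\<in>{idx (Suc t)..<idx (t + 2)}. real (vn c s l) / real (vn c s l + kF l))"
      using S1 unfolding StepC_def by blast
    show "(1 - \<delta> t / 8) * real (vm n0 c s kF (idx (Suc t))) \<le> real (vm n0 c s kE (idx (Suc t)))"
      using S1 unfolding StepC_def by blast
    show "\<psi> t = gd X (vm n0 c s kF (idx t)) (vd c (idx t)) (vd c (idx (Suc t))) (pslab X n0 c s kF xF kE (idx t) (idx (Suc t)))"
      unfolding \<psi>_def using t by simp
    show "\<psi> (Suc t) = gd X (vm n0 c s kE (idx (Suc t))) (vd c (idx (Suc t))) (vd c (idx (t + 2))) (pslab X n0 c s kE xE kF (idx (Suc t)) (idx (t + 2)))"
      unfolding \<psi>_def t2 using ot by simp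
  qed
  have C5: "\<forall>t. even t \<longrightarrow>
        (\<forall>h\<in>MC X (vm n0 c s kE (idx t)) (vd c (idx t)).
           mc_norm X (vm n0 c s kE (idx t)) (vd c (idx t)) h \<le> 1 \<longrightarrow>
           (\<forall>\<tau>. tracial_state X (vm n0 c s kE (idx (t + 2))) (vd c (idx (t + 2))) \<tau> \<longrightarrow>
              cmod (\<tau> (\<psi> (Suc t) (\<psi> t h)) - \<tau> (conn_maps X n0 c s kE xE (idx t) (idx (t + 2)) h))
                < \<delta> t))"
    using PE by simp
  have C6: "\<forall>t. odd t \<longrightarrow>
        (\<forall>h\<in>MC X (vm n0 c s kF (idx t)) (vd c (idx t)).
           mc_norm X (vm n0 c s kF (idx t)) (vd c (idx t)) h \<le> 1 \<longrightarrow>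
           (\<forall>\<tau>. tracial_state X (vm n0 c s kF (idx (t + 2))) (vd c (idx (t + 2))) \<tau> \<longrightarrow>
              cmod (\<tau> (\<psi> (Suc t) (\<psi> t h)) - \<tau> (conn_maps X n0 c s kF xF (idx t) (idx (t + 2)) h))
                < \<delta> t))"
    using PF by simp
  have C7: "\<forall>t. even t \<longrightarrow> (\<exists>Lam.
        diag_decomp X (vm n0 c s kE (idx t)) (vd c (idx t))
                      (vm n0 c s kE (idx (t + 2))) (vd c (idx (t + 2))) (\<psi> (Suc t) \<circ> \<psi> t) Lam
      \<and> diag_decomp X (vm n0 c s kE (idx t)) (vd c (idx t))
                      (vm n0 c s kE (idx (t + 2))) (vd c (idx (t + 2)))
                      (conn_maps X n0 c s kE xE (idx t) (idx (t + 2))) Lam)"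
    using PE by blast
  have C8: "\<forall>t. odd t \<longrightarrow> (\<exists>Lam.
        diag_decomp X (vm n0 c s kF (idx t)) (vd c (idx t))
                      (vm n0 c s kF (idx (t + 2))) (vd c (idx (t + 2))) (\<psi> (Suc t) \<circ> \<psi> t) Lam
      \<and> diag_decomp X (vm n0 c s kF (idx t)) (vd c (idx t))
                      (vm n0 c s kF (idx (t + 2))) (vd c (idx (t + 2)))
                      (conn_maps X n0 c s kF xF (idx t) (idx (t + 2))) Lam)"
    using PF by blast
  show ?thesis
    by (intro exI[of _ idx] exI[of _ \<psi>] conjI) (fact idx0 smono C3 C4 C5 C6 C7 C8)+
qed

end
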